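(* Let $g,h\in\mathrm{PSL}(2,\mathbb{C})$ be non-commuting loxodromic elements. If $z_0$ is the midpoint of the shortest geodesic segment connecting the axes of $g$ and $h^{-1}gh$, then $d_g z_0<d_{hgh^{-1}}z_0$.
   Context: For an isometry $\gamma$ of hyperbolic 3-space $\mathbb{H}^3$ (with hyperbolic metric $\rho$) and $z\in\mathbb{H}^3$, $d_\gamma z=\rho(z,\gamma z)$. The axis of a loxodromic element is its translation axis in $\mathbb{H}^3$. *)

theory Defs
  imports "HOL-Analysis.Analysis"
begin

text \<open>Upper half-space model of hyperbolic 3-space: a point z + t j is the pair (z, t), t > 0.\<close>

definition H3 :: "(complex \<times> real) set" where
  "H3 = {p. snd p > 0}"

definition hdist :: "complex \<times> real \<Rightarrow> complex \<times> real \<Rightarrow> real" where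
  "hdist p q = arcosh (1 + ((cmod (fst p - fst q))\<^sup>2 + (snd p - snd q)\<^sup>2) / (2 * snd p * snd q))"

text \<open>Elements of PSL(2,C) are represented by matrices in SL(2,C); everything below is
  invariant under A \<mapsto> -A.\<close>

definition SL2 :: "(complex^2^2) set" where
  "SL2 = {A. det A = 1}"

text \<open>Poincare extension: action of (a b; c d) on z + t j.\<close>
definition mob_act :: "complex^2^2 \<Rightarrow> complex \<times> real \<Rightarrow> complex \<times> real" where
  "mob_act A p =
    (let a = A$1$1; b = A$1$2; c = A$2$1; d = A$2$2; z = fst p; t = snd p;
         D = (cmod (c * z + d))\<^sup>2 + (cmod c)\<^sup>2 * t\<^sup>2
     in (((a * z + b) * cnj (c * z + d) + a * cnj c * complex_of_real (t\<^sup>2)) / complex_of_real D,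
         t / D))"

definition disp :: "complex^2^2 \<Rightarrow> complex \<times> real \<Rightarrow> real" where
  "disp A p = hdist p (mob_act A p)"

definition loxodromic :: "complex^2^2 \<Rightarrow> bool" where
  "loxodromic A \<longleftrightarrow> A \<in> SL2 \<and> trace A \<notin> complex_of_real ` {-2..2}"

text \<open>Commuting as elements of PSL(2,C).\<close>
definition psl_commute :: "complex^2^2 \<Rightarrow> complex^2^2 \<Rightarrow> bool" where
  "psl_commute A B \<longleftrightarrow> A ** B = B ** A \<or> A ** B = - (B ** A)"

definition geodesic_line :: "(complex \<times> real) set \<Rightarrow> bool" where
  "geodesic_line L \<longleftrightarrow> (\<exists>\<gamma>. (\<forall>s. \<gamma> s \<in> H3) \<and> (\<forall>s t. hdist (\<gamma> s) (\<gamma> t) = \<bar>s - t\<bar>) \<and> L = range \<gamma>)"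

definition axis :: "complex^2^2 \<Rightarrow> (complex \<times> real) set" where
  "axis A = (THE L. geodesic_line L \<and> mob_act A ` L = L)"

definition hmidpoint :: "complex \<times> real \<Rightarrow> complex \<times> real \<Rightarrow> complex \<times> real \<Rightarrow> bool" where
  "hmidpoint p q m \<longleftrightarrow> m \<in> H3 \<and> hdist p m = hdist p q / 2 \<and> hdist m q = hdist p q / 2"

end

theory Submission
  imports Defs
begin


definition mk :: "complex \<Rightarrow> complex \<Rightarrow> complex \<Rightarrow> complex \<Rightarrow> complex^2^2" where
  "mk a b c d = vector [vector [a,b], vector [c,d]]"

lemma mk_nth [simp]: "mk a b c d $1$1 = a" "mk a b c d $1$2 = b" "mk a b c d $2$1 = c" "mk a b c d $2$2 = d"
  by (simp_all add: mk_def vector_2)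

lemma mk_eq: "A = mk (A$1$1) (A$1$2) (A$2$1) (A$2$2)"
  by (simp add: vec_eq_iff forall_2)

lemma mk_cases: obtains a b c d where "A = mk a b c d"
  using mk_eq by blast

lemma mk_inject [simp]: "mk a b c d = mk a' b' c' d' \<longleftrightarrow> a = a' \<and> b = b' \<and> c = c' \<and> d = d'"
  by (auto simp: vec_eq_iff forall_2)

lemma mk_mult [simp]: "mk a b c d ** mk a' b' c' d' = mk (a*a'+b*c') (a*b'+b*d') (c*a'+d*c') (c*b'+d*d')"
  by (simp add: vec_eq_iff forall_2 matrix_matrix_mult_def sum_2)

lemma mk_det [simp]: "det (mk a b c d) = a*d - b*c"
  by (simp add: det_2)

lemma mk_trace [simp]: "trace (mk a b c d) = a + d"
  by (simp add: trace_def sum_2)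

lemma mat1_mk: "mat 1 = mk 1 0 0 1"
  by (simp add: vec_eq_iff forall_2 mat_def)

lemma mk_neg [simp]: "- mk a b c d = mk (-a) (-b) (-c) (-d)"
  by (simp add: vec_eq_iff forall_2)

lemma matrix_inv_eq:
  fixes A B :: "complex^2^2"
  assumes "A ** B = mat 1" "B ** A = mat 1"
  shows "matrix_inv A = B"
proof -
  have ex: "\<exists>A'. A ** A' = mat 1 \<and> A' ** A = mat 1" using assms by blast
  define C where "C = matrix_inv A"
  have C: "A ** C = mat 1" "C ** A = mat 1"
    using someI_ex[OF ex] unfolding C_def matrix_inv_def by auto
  have "C = C ** (A ** B)" using assms by simp
  also have "\<dots> = (C ** A) ** B" by (simp add: matrix_mul_assoc)
  also have "\<dots> = B" using C by simp
  finally show ?thesis unfolding C_def .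
qed

lemma matrix_inv_mk:
  assumes "a*d - b*c = 1"
  shows "matrix_inv (mk a b c d) = mk d (-b) (-c) a"
  apply (rule matrix_inv_eq)
  using assms by (simp_all add: mat1_mk algebra_simps)

lemma mob_mk: "mob_act (mk a b c d) (z,t) =
   (((a * z + b) * cnj (c * z + d) + a * cnj c * complex_of_real (t\<^sup>2)) / complex_of_real ((cmod (c * z + d))\<^sup>2 + (cmod c)\<^sup>2 * t\<^sup>2),
         t / ((cmod (c * z + d))\<^sup>2 + (cmod c)\<^sup>2 * t\<^sup>2))"
  by (simp add: mob_act_def Let_def)

lemma Dpos:
  assumes "a*d - b*c = 1" "t > 0"
  shows "(cmod (c * z + d))\<^sup>2 + (cmod c)\<^sup>2 * t\<^sup>2 > 0"
proof (cases "c = 0")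
  case True
  then have "d \<noteq> 0" using assms by auto
  then show ?thesis using True by simp
next
  case False
  then have "(cmod c)\<^sup>2 * t\<^sup>2 > 0" using assms by simp
  then show ?thesis by (smt (verit) zero_le_power2)
qed

lemma mob_H3:
  assumes "det A = 1" "p \<in> H3"
  shows "mob_act A p \<in> H3"
proof -
  obtain a b c d where A: "A = mk a b c d" by (rule mk_cases)
  obtain z t where p: "p = (z,t)" by fastforce
  have "t > 0" using assms p by (simp add: H3_def)
  then show ?thesis using Dpos[of a d b c t z] assms A p by (simp add: mob_mk H3_def)
qed

lemma compD_poly:
  fixes a b c d a' b' c' d' z A B C D A' B' C' D' Z T :: complex
  assumes "a*d-b*c=1" "A*D-B*C=1" "a'*d'-b'*c'=1" "A'*D'-B'*C'=1"
  shows "(c*((a'*z+b')*(C'*Z+D') + a'*C'*T)+d*((c'*z+d')*(C'*Z+D') + c'*C'*T))*(C*((A'*Z+B')*(c'*z+d') + A'*c'*T)+D*((c'*z+d')*(C'*Z+D') + c'*C'*T)) + c*C*T = (((c*a'+d*c')*z + (c*b'+d*d'))*((C*A'+D*C')*Z + (C*B'+D*D')) + (c*a'+d*c')*(C*A'+D*C')*T) * ((c'*z+d')*(C'*Z+D') + c'*C'*T)"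
  using assms by algebra

lemma compN_poly:
  fixes a b c d a' b' c' d' z A B C D A' B' C' D' Z T :: complex
  assumes "a*d-b*c=1" "A*D-B*C=1" "a'*d'-b'*c'=1" "A'*D'-B'*C'=1"
  shows "(a*((a'*z+b')*(C'*Z+D') + a'*C'*T)+b*((c'*z+d')*(C'*Z+D') + c'*C'*T))*(C*((A'*Z+B')*(c'*z+d') + A'*c'*T)+D*((c'*z+d')*(C'*Z+D') + c'*C'*T)) + a*C*T = (((a*a'+b*c')*z + (a*b'+b*d'))*((C*A'+D*C')*Z + (C*B'+D*D')) + (a*a'+b*c')*(C*A'+D*C')*T) * ((c'*z+d')*(C'*Z+D') + c'*C'*T)"
  using assms by algebra

lemma cnj_det: "a*d-b*c = (1::complex) \<Longrightarrow> cnj a * cnj d - cnj b * cnj c = 1"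
  by (metis complex_cnj_diff complex_cnj_mult complex_cnj_one)

lemma normsq: "complex_of_real ((cmod x)\<^sup>2) = x * cnj x"
  by (rule complex_norm_square)

lemma mob_comp_mk:
  assumes d1: "a*d-b*c = 1" and d2: "a'*d'-b'*c' = 1" and t: "t > 0"
  shows "mob_act (mk a b c d ** mk a' b' c' d') (z,t) = mob_act (mk a b c d) (mob_act (mk a' b' c' d') (z,t))"
proof -
  define D1 where "D1 = (cmod (c' * z + d'))\<^sup>2 + (cmod c')\<^sup>2 * t\<^sup>2"
  define N1 where "N1 = (a' * z + b') * cnj (c' * z + d') + a' * cnj c' * complex_of_real (t\<^sup>2)"
  have D1pos: "D1 > 0" unfolding D1_def using Dpos[OF d2 t] .
  define z1 where "z1 = N1 / complex_of_real D1"
  define t1 where "t1 = t / D1"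
  have B: "mob_act (mk a' b' c' d') (z,t) = (z1, t1)"
    unfolding z1_def t1_def N1_def D1_def mob_mk ..
  define D2 where "D2 = (cmod (c * z1 + d))\<^sup>2 + (cmod c)\<^sup>2 * t1\<^sup>2"
  define N2 where "N2 = (a * z1 + b) * cnj (c * z1 + d) + a * cnj c * complex_of_real (t1\<^sup>2)"
  have A: "mob_act (mk a b c d) (z1,t1) = (N2 / complex_of_real D2, t1 / D2)"
    unfolding N2_def D2_def mob_mk ..
  define a3 where "a3 = a*a'+b*c'"
  define b3 where "b3 = a*b'+b*d'"
  define c3 where "c3 = c*a'+d*c'"
  define d3 where "d3 = c*b'+d*d'"
  define D3 where "D3 = (cmod (c3 * z + d3))\<^sup>2 + (cmod c3)\<^sup>2 * t\<^sup>2"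
  define N3 where "N3 = (a3 * z + b3) * cnj (c3 * z + d3) + a3 * cnj c3 * complex_of_real (t\<^sup>2)"
  have AB: "mob_act (mk a b c d ** mk a' b' c' d') (z,t) = (N3 / complex_of_real D3, t / D3)"
    unfolding N3_def D3_def mk_mult mob_mk a3_def b3_def c3_def d3_def ..
  define T where "T = complex_of_real (t\<^sup>2)"
  have cD1: "complex_of_real D1 = (c'*z+d')*(cnj c'*cnj z+cnj d') + c'*cnj c'*T"
    unfolding D1_def T_def of_real_add of_real_mult normsq by simp
  have cN1: "cnj N1 = (cnj a'*cnj z+cnj b')*(c'*z+d') + cnj a'*c'*T"
    unfolding N1_def T_def by simp
  have N1e: "N1 = (a'*z+b')*(cnj c'*cnj z+cnj d') + a'*cnj c'*T"
    unfolding N1_def T_def by simp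
  have cT: "cnj T = T" unfolding T_def by simp
  have cD2: "complex_of_real D2 * complex_of_real D1 ^ 2 = (c*N1+d*complex_of_real D1)*(cnj c*cnj N1+cnj d*complex_of_real D1) + c*cnj c*T"
    unfolding D2_def of_real_add of_real_mult normsq z1_def t1_def T_def using D1pos
    by (simp add: field_simps power2_eq_square)
  have cN2: "N2 * complex_of_real D1 ^ 2 = (a*N1+b*complex_of_real D1)*(cnj c*cnj N1+cnj d*complex_of_real D1) + a*cnj c*T"
    unfolding N2_def z1_def t1_def T_def using D1pos
    by (simp add: field_simps power2_eq_square)
  have cD3: "complex_of_real D3 = (c3*z+d3)*(cnj c3*cnj z+cnj d3) + c3*cnj c3*T"
    unfolding D3_def of_real_add of_real_mult normsq T_def by simp
  have N3e: "N3 = (a3*z+b3)*(cnj c3*cnj z+cnj d3) + a3*cnj c3*T"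
    unfolding N3_def T_def by simp
  have e1: "complex_of_real D2 * complex_of_real D1 ^ 2 = complex_of_real D3 * complex_of_real D1"
    apply (subst cD2, subst cD3)
    unfolding cN1 cD1 N1e a3_def b3_def c3_def d3_def complex_cnj_add complex_cnj_mult complex_cnj_cnj cT
    by (rule compD_poly[OF d1 cnj_det[OF d1] d2 cnj_det[OF d2]])
  have e2: "N2 * complex_of_real D1 ^ 2 = N3 * complex_of_real D1"
    apply (subst cN2, subst N3e)
    unfolding cN1 cD1 N1e a3_def b3_def c3_def d3_def complex_cnj_add complex_cnj_mult complex_cnj_cnj cT
    by (rule compN_poly[OF d1 cnj_det[OF d1] d2 cnj_det[OF d2]])
  have D1ne: "complex_of_real D1 \<noteq> 0" using D1pos by simp
  have f1: "D2 * D1 = D3"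
  proof -
    have "complex_of_real (D2 * D1) = complex_of_real D3"
      using e1 D1ne by (simp add: power2_eq_square)
    then show ?thesis using of_real_eq_iff by blast
  qed
  have f2: "N2 * complex_of_real D1 = N3"
    using e2 D1ne by (simp add: power2_eq_square)
  have "a3*d3-b3*c3 = (a*d-b*c)*(a'*d'-b'*c')"
    unfolding a3_def b3_def c3_def d3_def by algebra
  then have d3: "a3*d3-b3*c3 = 1" using d1 d2 by simp
  have D2pos: "D2 > 0" using f1 D1pos Dpos[OF d3 t, of z] 
    by (metis D3_def zero_less_mult_pos2)
  show ?thesis unfolding AB B A
    using D1pos D2pos f1[symmetric] f2[symmetric] unfolding t1_def
    by (simp add: field_simps)
qed

lemma isom_poly:
  fixes a b c d z A B C D Z y Y t s :: complex
  assumes "a*d-b*c=1" "A*D-B*C=1"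
  shows "(((a*z+b)*(C*Z+D) + a*C*(t*t))*((c*y+d)*(C*Y+D) + c*C*(s * s)) - ((a*y+b)*(C*Y+D) + a*C*(s * s))*((c*z+d)*(C*Z+D) + c*C*(t*t)))
        *(((A*Z+B)*(c*z+d) + A*c*(t*t))*((c*y+d)*(C*Y+D) + c*C*(s * s)) - ((A*Y+B)*(c*y+d) + A*c*(s * s))*((c*z+d)*(C*Z+D) + c*C*(t*t)))
       + (t*((c*y+d)*(C*Y+D) + c*C*(s * s)) - s*((c*z+d)*(C*Z+D) + c*C*(t*t)))^2
     = ((c*z+d)*(C*Z+D) + c*C*(t*t))*((c*y+d)*(C*Y+D) + c*C*(s * s))*((z-y)*(Z-Y) + (t-s)^2)"
  using assms by algebra

definition Qd :: "complex \<times> real \<Rightarrow> complex \<times> real \<Rightarrow> real" where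
  "Qd p q = ((cmod (fst p - fst q))\<^sup>2 + (snd p - snd q)\<^sup>2) / (snd p * snd q)"

lemma hdist_Qd: "hdist p q = arcosh (1 + Qd p q / 2)"
  unfolding hdist_def Qd_def by (simp add: field_simps)

lemma mob_isom_mk:
  assumes d1: "a*d-b*c = 1" and t: "t > 0" and s: "s > 0"
  shows "Qd (mob_act (mk a b c d) (z,t)) (mob_act (mk a b c d) (y,s)) = Qd (z,t) (y,s)"
proof -
  define Dz where "Dz = (cmod (c * z + d))\<^sup>2 + (cmod c)\<^sup>2 * t\<^sup>2"
  define Nz where "Nz = (a * z + b) * cnj (c * z + d) + a * cnj c * complex_of_real (t\<^sup>2)"
  define Dy where "Dy = (cmod (c * y + d))\<^sup>2 + (cmod c)\<^sup>2 * s\<^sup>2"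
  define Ny where "Ny = (a * y + b) * cnj (c * y + d) + a * cnj c * complex_of_real (s\<^sup>2)"
  have Dzp: "Dz > 0" unfolding Dz_def using Dpos[OF d1 t] .
  have Dyp: "Dy > 0" unfolding Dy_def using Dpos[OF d1 s] .
  have e: "mob_act (mk a b c d) (z,t) = (Nz / Dz, t / Dz)" "mob_act (mk a b c d) (y,s) = (Ny / Dy, s / Dy)"
    unfolding Nz_def Dz_def Ny_def Dy_def mob_mk by simp_all
  have cDz: "complex_of_real Dz = (c*z+d)*(cnj c*cnj z+cnj d) + c*cnj c*(of_real t * of_real t)"
    unfolding Dz_def of_real_add of_real_mult normsq by (simp add: power2_eq_square)
  have cDy: "complex_of_real Dy = (c*y+d)*(cnj c*cnj y+cnj d) + c*cnj c*(of_real s * of_real s)"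
    unfolding Dy_def of_real_add of_real_mult normsq by (simp add: power2_eq_square)
  have Nze: "Nz = (a*z+b)*(cnj c*cnj z+cnj d) + a*cnj c*(of_real t * of_real t)"
    unfolding Nz_def by (simp add: power2_eq_square)
  have Nye: "Ny = (a*y+b)*(cnj c*cnj y+cnj d) + a*cnj c*(of_real s * of_real s)"
    unfolding Ny_def by (simp add: power2_eq_square)
  have key: "complex_of_real ((cmod (Nz*Dy - Ny*Dz))\<^sup>2 + (t*Dy - s*Dz)\<^sup>2) = complex_of_real (Dz*Dy*((cmod (z-y))\<^sup>2 + (t-s)\<^sup>2))"
    unfolding of_real_add of_real_mult normsq
    unfolding of_real_power of_real_diff of_real_mult
    apply (simp only: complex_cnj_diff complex_cnj_mult complex_cnj_complex_of_real)
    unfolding cDz cDy Nze Nye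
    apply (simp only: complex_cnj_add complex_cnj_mult complex_cnj_complex_of_real complex_cnj_cnj complex_cnj_diff)
    by (rule isom_poly[OF d1 cnj_det[OF d1]])
  then have key': "(cmod (Nz*Dy - Ny*Dz))\<^sup>2 + (t*Dy - s*Dz)\<^sup>2 = Dz*Dy*((cmod (z-y))\<^sup>2 + (t-s)\<^sup>2)"
    using of_real_eq_iff by blast
  have n: "cmod (Nz / Dz - Ny / Dy) = cmod (Nz*Dy - Ny*Dz) / (Dz*Dy)"
  proof -
    have "Nz / Dz - Ny / Dy = (Nz*Dy - Ny*Dz) / complex_of_real (Dz*Dy)"
      using Dzp Dyp by (simp add: field_simps)
    then show ?thesis using Dzp Dyp by (simp add: norm_divide norm_mult)
  qed
  have t2: "t / Dz - s / Dy = (t*Dy - s*Dz) / (Dz*Dy)" using Dzp Dyp by (simp add: field_simps)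
  show ?thesis unfolding e Qd_def fst_conv snd_conv n t2
    using Dzp Dyp t s key' by (simp add: field_simps power2_eq_square)
qed

lemma mob_comp:
  assumes "det A = 1" "det B = 1" "p \<in> H3"
  shows "mob_act (A ** B) p = mob_act A (mob_act B p)"
proof -
  obtain a b c d where A: "A = mk a b c d" by (rule mk_cases)
  obtain a' b' c' d' where B: "B = mk a' b' c' d'" by (rule mk_cases)
  obtain z t where p: "p = (z,t)" by fastforce
  show ?thesis using mob_comp_mk[of a d b c a' d' b' c' t z] assms A B p by (simp add: H3_def)
qed

lemma mob_isom_Qd:
  assumes "det A = 1" "p \<in> H3" "q \<in> H3"
  shows "Qd (mob_act A p) (mob_act A q) = Qd p q"
proof -
  obtain a b c d where A: "A = mk a b c d" by (rule mk_cases)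
  obtain z t where p: "p = (z,t)" by fastforce
  obtain y s where q: "q = (y,s)" by fastforce
  show ?thesis using mob_isom_mk[of a d b c t s z y] assms A p q by (simp add: H3_def)
qed

lemma mob_isom:
  assumes "det A = 1" "p \<in> H3" "q \<in> H3"
  shows "hdist (mob_act A p) (mob_act A q) = hdist p q"
  using mob_isom_Qd[OF assms] by (simp add: hdist_Qd)

lemma mob_id [simp]: "mob_act (mat 1) p = p"
  by (cases p) (simp add: mat1_mk mob_mk)

lemma inv_props:
  fixes A :: "complex^2^2"
  assumes "det A = 1"
  shows "matrix_inv A ** A = mat 1" "A ** matrix_inv A = mat 1" "det (matrix_inv A) = 1"
    "matrix_inv (matrix_inv A) = A"
proof -
  obtain a b c d where A: "A = mk a b c d" by (rule mk_cases)
  have d: "a*d-b*c = 1" using assms A by simp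
  have i: "matrix_inv (mk a b c d) = mk d (-b) (-c) a" using matrix_inv_mk[OF d] by simp
  show "matrix_inv A ** A = mat 1" "A ** matrix_inv A = mat 1" "det (matrix_inv A) = 1"
    using d unfolding A i by (simp_all add: mat1_mk algebra_simps)
  have d2: "d*a - (-b)*(-c) = 1" using d by (simp add: algebra_simps)
  show "matrix_inv (matrix_inv A) = A" unfolding A i matrix_inv_mk[OF d2] by simp
qed

lemma det_mult1: "det (A::complex^2^2) = 1 \<Longrightarrow> det B = 1 \<Longrightarrow> det (A ** B) = 1"
  by (simp add: det_mul)

lemma mob_inv:
  assumes "det A = 1" "p \<in> H3"
  shows "mob_act (matrix_inv A) (mob_act A p) = p" "mob_act A (mob_act (matrix_inv A) p) = p"
  using mob_comp[of "matrix_inv A" A p] mob_comp[of A "matrix_inv A" p] inv_props[OF assms(1)] assms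
  by auto

definition K :: "complex \<times> real \<Rightarrow> complex \<times> real \<Rightarrow> real" where
  "K p q = 1 + Qd p q / 2"

lemma hdist_K: "hdist p q = arcosh (K p q)"
  unfolding K_def hdist_Qd ..

lemma Qd_nonneg: "p \<in> H3 \<Longrightarrow> q \<in> H3 \<Longrightarrow> Qd p q \<ge> 0"
  unfolding Qd_def H3_def by simp

lemma K_ge1: "p \<in> H3 \<Longrightarrow> q \<in> H3 \<Longrightarrow> K p q \<ge> 1"
  unfolding K_def using Qd_nonneg by simp

lemma cosh_hdist: "p \<in> H3 \<Longrightarrow> q \<in> H3 \<Longrightarrow> cosh (hdist p q) = K p q"
  unfolding hdist_K using K_ge1 by simp

lemma hdist_nonneg: "p \<in> H3 \<Longrightarrow> q \<in> H3 \<Longrightarrow> hdist p q \<ge> 0"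
  unfolding hdist_K using K_ge1 by simp

lemma Qd_sym: "Qd p q = Qd q p"
  unfolding Qd_def by (simp add: norm_minus_commute power2_commute mult.commute)

lemma hdist_sym: "hdist p q = hdist q p"
  unfolding hdist_Qd using Qd_sym by simp

lemma hdist_refl [simp]: "hdist p p = 0"
  unfolding hdist_Qd Qd_def by simp

lemma Qd_zero: "p \<in> H3 \<Longrightarrow> q \<in> H3 \<Longrightarrow> Qd p q = 0 \<Longrightarrow> p = q"
  unfolding Qd_def H3_def by (cases p, cases q) (auto simp: add_nonneg_eq_0_iff)

lemma hdist_zero: "p \<in> H3 \<Longrightarrow> q \<in> H3 \<Longrightarrow> hdist p q = 0 \<Longrightarrow> p = q"
  using K_ge1 Qd_zero unfolding hdist_K K_def
  by (metis add_cancel_left_right arcosh_eq_0_iff_real divide_eq_0_iff zero_neq_numeral)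

lemma hdist_le_iff: "p \<in> H3 \<Longrightarrow> q \<in> H3 \<Longrightarrow> p' \<in> H3 \<Longrightarrow> q' \<in> H3 \<Longrightarrow>
   hdist p q \<le> hdist p' q' \<longleftrightarrow> K p q \<le> K p' q'"
  unfolding hdist_K using K_ge1 by (meson arcosh_less_iff_real not_le)

lemma hdist_less_iff: "p \<in> H3 \<Longrightarrow> q \<in> H3 \<Longrightarrow> p' \<in> H3 \<Longrightarrow> q' \<in> H3 \<Longrightarrow>
   hdist p q < hdist p' q' \<longleftrightarrow> K p q < K p' q'"
  unfolding hdist_K using K_ge1 by simp

section \<open>Hyperboloid coordinates\<close>

definition X0 :: "complex \<times> real \<Rightarrow> real" where
  "X0 p = ((cmod (fst p))\<^sup>2 + (snd p)\<^sup>2 + 1) / (2 * snd p)"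

definition Xv :: "complex \<times> real \<Rightarrow> complex \<times> real" where
  "Xv p = (fst p / complex_of_real (snd p), ((cmod (fst p))\<^sup>2 + (snd p)\<^sup>2 - 1) / (2 * snd p))"

lemma cmod_sq: "(cmod z)\<^sup>2 = (Re z)\<^sup>2 + (Im z)\<^sup>2"
  by (simp add: cmod_power2)

lemma K_hyp:
  assumes "p \<in> H3" "q \<in> H3"
  shows "K p q = X0 p * X0 q - Xv p \<bullet> Xv q"
proof -
  obtain z t where p: "p = (z,t)" by fastforce
  obtain y s where q: "q = (y,s)" by fastforce
  have t: "t > 0" and s: "s > 0" using assms p q by (auto simp: H3_def)
  have "Re (z / complex_of_real t) = Re z / t" "Im (z / complex_of_real t) = Im z / t"
       "Re (y / complex_of_real s) = Re y / s" "Im (y / complex_of_real s) = Im y / s"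
    by (simp_all add: Re_divide_of_real Im_divide_of_real)
  moreover have c1: "(cmod (z - y))\<^sup>2 = (Re z - Re y)\<^sup>2 + (Im z - Im y)\<^sup>2" by (simp add: cmod_sq)
  moreover have c2: "(cmod z)\<^sup>2 = (Re z)\<^sup>2 + (Im z)\<^sup>2" "(cmod y)\<^sup>2 = (Re y)\<^sup>2 + (Im y)\<^sup>2" by (simp_all add: cmod_sq)
  ultimately show ?thesis unfolding p q K_def Qd_def X0_def Xv_def fst_conv snd_conv inner_Pair inner_complex_def inner_real_def c1 c2
    using t s by (simp add: field_simps power2_eq_square)
qed

definition e0 :: "complex \<times> real" where "e0 = (0, 1)"

lemma e0_H3 [simp]: "e0 \<in> H3" by (simp add: e0_def H3_def)

lemma K_e0: "p \<in> H3 \<Longrightarrow> K e0 p = X0 p"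
  unfolding K_def Qd_def X0_def e0_def H3_def by (cases p) (simp add: field_simps power2_eq_square)

lemma Xv_norm: "p \<in> H3 \<Longrightarrow> (norm (Xv p))\<^sup>2 = (X0 p)\<^sup>2 - 1"
proof -
  assume "p \<in> H3"
  then have "K p p = X0 p * X0 p - Xv p \<bullet> Xv p" using K_hyp by blast
  moreover have "K p p = 1" unfolding K_def Qd_def by simp
  moreover have "(norm (Xv p))\<^sup>2 = Xv p \<bullet> Xv p" by (simp add: power2_norm_eq_inner)
  ultimately show ?thesis by (simp add: power2_eq_square)
qed

lemma X0_ge1: assumes "p \<in> H3" shows "X0 p \<ge> 1"
  using K_e0[OF assms] K_ge1[OF e0_H3 assms] by simp

lemma Xv_inj:
  assumes "p \<in> H3" "q \<in> H3" "X0 p = X0 q" "Xv p = Xv q"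
  shows "p = q"
proof -
  obtain z t where p: "p = (z,t)" by fastforce
  obtain y s where q: "q = (y,s)" by fastforce
  have t: "t > 0" and s: "s > 0" using assms p q by (auto simp: H3_def)
  have "X0 p - snd (Xv p) = 1 / t" unfolding p X0_def Xv_def using t by (simp add: field_simps)
  moreover have "X0 q - snd (Xv q) = 1 / s" unfolding q X0_def Xv_def using s by (simp add: field_simps)
  ultimately have ts: "t = s" using assms by simp
  have "fst (Xv p) = z / t" "fst (Xv q) = y / s" unfolding p q Xv_def by simp_all
  then have "z = y" using assms ts t by (simp add: field_simps)
  then show ?thesis using p q ts by simp
qed

section \<open>Translations/dilations moving a point to e0\<close>

definition Sh :: "complex \<times> real \<Rightarrow> complex \<times> real \<Rightarrow> complex \<times> real" where
  "Sh y p = ((fst p - fst y) / complex_of_real (snd y), snd p / snd y)"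

lemma Sh_H3: "y \<in> H3 \<Longrightarrow> p \<in> H3 \<Longrightarrow> Sh y p \<in> H3"
  unfolding Sh_def H3_def by simp

lemma Sh_self: "y \<in> H3 \<Longrightarrow> Sh y y = e0"
  unfolding Sh_def H3_def e0_def by simp

lemma Sh_Qd:
  assumes "y \<in> H3" "p \<in> H3" "q \<in> H3"
  shows "Qd (Sh y p) (Sh y q) = Qd p q"
proof -
  have ty: "snd y > 0" using assms by (simp add: H3_def)
  have "(fst p - fst y) / complex_of_real (snd y) - (fst q - fst y) / complex_of_real (snd y)
      = (fst p - fst q) / complex_of_real (snd y)" by (simp add: diff_divide_distrib)
  then have n: "cmod ((fst p - fst y) / complex_of_real (snd y) - (fst q - fst y) / complex_of_real (snd y))
      = cmod (fst p - fst q) / snd y" using ty by (simp add: norm_divide)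
  define y2 where "y2 = (snd y)\<^sup>2"
  have y2: "y2 > 0" using ty y2_def by simp
  have num: "(cmod (fst p - fst q) / snd y)\<^sup>2 + (snd p / snd y - snd q / snd y)\<^sup>2
     = ((cmod (fst p - fst q))\<^sup>2 + (snd p - snd q)\<^sup>2) / y2"
    unfolding y2_def using ty by (simp add: field_simps power2_eq_square)
  have den: "snd p / snd y * (snd q / snd y) = (snd p * snd q) / y2"
    unfolding y2_def using ty by (simp add: field_simps power2_eq_square)
  show ?thesis unfolding Qd_def Sh_def fst_conv snd_conv n num den using y2
    by simp
qed

lemma Sh_hdist: "y \<in> H3 \<Longrightarrow> p \<in> H3 \<Longrightarrow> q \<in> H3 \<Longrightarrow> hdist (Sh y p) (Sh y q) = hdist p q"
  unfolding hdist_Qd using Sh_Qd by simp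

lemma Sh_inj: "y \<in> H3 \<Longrightarrow> Sh y p = Sh y q \<Longrightarrow> p = q"
  unfolding Sh_def H3_def by (cases p, cases q) (auto simp: field_simps)

lemma tri_e0:
  assumes "x \<in> H3" "z \<in> H3"
  shows "hdist x z \<le> hdist x e0 + hdist e0 z"
proof -
  define u where "u = X0 x"
  define v where "v = X0 z"
  have u1: "u \<ge> 1" and v1: "v \<ge> 1" using X0_ge1 assms u_def v_def by auto
  have nx: "norm (Xv x) = sqrt (u\<^sup>2 - 1)" using Xv_norm[OF assms(1)] u_def
    by (metis norm_ge_zero real_sqrt_abs real_sqrt_unique abs_of_nonneg)
  have nz: "norm (Xv z) = sqrt (v\<^sup>2 - 1)" using Xv_norm[OF assms(2)] v_def
    by (metis norm_ge_zero real_sqrt_abs real_sqrt_unique abs_of_nonneg)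
  have "- (Xv x \<bullet> Xv z) \<le> norm (Xv x) * norm (Xv z)"
    using norm_cauchy_schwarz[of "- Xv x" "Xv z"] by simp
  then have Kle: "K x z \<le> u * v + sqrt (u\<^sup>2 - 1) * sqrt (v\<^sup>2 - 1)"
    using K_hyp[OF assms] u_def v_def nx nz by simp
  have d1: "hdist x e0 = arcosh u" using K_e0[OF assms(1)] u_def hdist_sym hdist_K by metis
  have d2: "hdist e0 z = arcosh v" using K_e0[OF assms(2)] v_def hdist_K by metis
  have c: "cosh (arcosh u + arcosh v) = u * v + sqrt (u\<^sup>2 - 1) * sqrt (v\<^sup>2 - 1)"
    using u1 v1 by (simp add: cosh_add sinh_arcosh_real)
  have pos: "arcosh u + arcosh v \<ge> 0" using u1 v1 by simp
  have "hdist x z = arcosh (K x z)" by (rule hdist_K)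
  also have "\<dots> \<le> arcosh (cosh (arcosh u + arcosh v))"
    using Kle c K_ge1[OF assms] arcosh_less_iff_real
    by (smt (verit) cosh_real_ge_1)
  also have "\<dots> = arcosh u + arcosh v" using pos by (simp add: arcosh_cosh_real)
  finally show ?thesis using d1 d2 by simp
qed

lemma hdist_tri:
  assumes "x \<in> H3" "y \<in> H3" "z \<in> H3"
  shows "hdist x z \<le> hdist x y + hdist y z"
  using tri_e0[OF Sh_H3[OF assms(2,1)] Sh_H3[OF assms(2,3)]] Sh_hdist assms Sh_self[OF assms(2)]
  by metis

lemma X0_cosh: "p \<in> H3 \<Longrightarrow> X0 p = cosh (hdist e0 p)"
  using cosh_hdist[OF e0_H3] K_e0 by simp

lemma Xv_sinh:
  assumes "p \<in> H3" shows "norm (Xv p) = sinh (hdist e0 p)"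
proof -
  have h: "hdist e0 p \<ge> 0" using hdist_nonneg[OF e0_H3 assms] .
  have "(norm (Xv p))\<^sup>2 = (sinh (hdist e0 p))\<^sup>2"
    using Xv_norm[OF assms] X0_cosh[OF assms] by (simp add: sinh_square_eq)
  moreover have "sinh (hdist e0 p) \<ge> 0" using h by simp
  ultimately show ?thesis by (metis norm_ge_zero power2_eq_iff_nonneg)
qed

lemma ext_unique_e0:
  assumes y: "y \<in> H3" and z: "z \<in> H3" and z': "z' \<in> H3" and ne: "y \<noteq> e0"
    and h1: "hdist e0 z = hdist e0 z'" and h2: "hdist y z = hdist y z'"
    and h3: "hdist y z = hdist e0 y + hdist e0 z"
  shows "z = z'"
proof -
  define a where "a = hdist e0 z"
  define b where "b = hdist e0 y"
  have a0: "a \<ge> 0" unfolding a_def using hdist_nonneg z by simp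
  have b0: "b > 0" unfolding b_def using hdist_nonneg[OF e0_H3 y] hdist_zero[OF e0_H3 y] ne by force
  show ?thesis
  proof (cases "a = 0")
    case True
    then have "z = e0" "z' = e0" using hdist_zero[OF e0_H3 z] hdist_zero[OF e0_H3 z'] h1 a_def by auto
    then show ?thesis by simp
  next
    case False
    then have ap: "a > 0" using a0 by simp
    have key: "Xv w = - (sinh a / sinh b) *\<^sub>R Xv y" if w: "w \<in> H3" and hw1: "hdist e0 w = a"
      and hw2: "hdist y w = b + a" for w
    proof -
      have "cosh (b + a) = X0 y * X0 w - Xv y \<bullet> Xv w"
        using cosh_hdist[OF y w] K_hyp[OF y w] hw2 by simp
      then have "Xv y \<bullet> Xv w = - (sinh b * sinh a)"
        using X0_cosh[OF y] X0_cosh[OF w] hw1 b_def by (simp add: cosh_add)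
      then have "(- Xv y) \<bullet> Xv w = norm (- Xv y) * norm (Xv w)"
        using Xv_sinh[OF y] Xv_sinh[OF w] hw1 b_def by simp
      then have "norm (- Xv y) *\<^sub>R Xv w = norm (Xv w) *\<^sub>R (- Xv y)"
        using norm_cauchy_schwarz_eq by blast
      then have eq: "sinh b *\<^sub>R Xv w = - (sinh a *\<^sub>R Xv y)"
        using Xv_sinh[OF y] Xv_sinh[OF w] hw1 b_def by simp
      have "sinh b > 0" using b0 by simp
      then have "Xv w = (1 / sinh b) *\<^sub>R (sinh b *\<^sub>R Xv w)" by simp
      also have "\<dots> = - (sinh a / sinh b) *\<^sub>R Xv y" unfolding eq by simp
      finally show ?thesis .
    qed
    have "Xv z = Xv z'"
      using key[OF z] key[OF z'] h1 h2 h3 a_def b_def by (simp add: add.commute)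
    moreover have "X0 z = X0 z'" using X0_cosh z z' h1 by simp
    ultimately show ?thesis using Xv_inj z z' by blast
  qed
qed

lemma ext_unique:
  assumes x: "x \<in> H3" and y: "y \<in> H3" and z: "z \<in> H3" and z': "z' \<in> H3" and ne: "y \<noteq> x"
    and h1: "hdist x z = hdist x z'" and h2: "hdist y z = hdist y z'"
    and h3: "hdist y z = hdist x y + hdist x z"
  shows "z = z'"
proof -
  have "Sh x z = Sh x z'"
  proof (rule ext_unique_e0[of "Sh x y"])
    show "Sh x y \<in> H3" "Sh x z \<in> H3" "Sh x z' \<in> H3" using Sh_H3 x y z z' by auto
    show "Sh x y \<noteq> e0" using ne Sh_inj[OF x, of y x] Sh_self[OF x] by auto
    show "hdist e0 (Sh x z) = hdist e0 (Sh x z')"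
      using Sh_hdist Sh_self x z z' h1 by metis
    show "hdist (Sh x y) (Sh x z) = hdist (Sh x y) (Sh x z')"
      using Sh_hdist x y z z' h2 by metis
    show "hdist (Sh x y) (Sh x z) = hdist e0 (Sh x y) + hdist e0 (Sh x z)"
      using Sh_hdist Sh_self x y z h3 by metis
  qed
  then show ?thesis using Sh_inj[OF x] by blast
qed

definition Vl :: "(complex \<times> real) set" where
  "Vl = {p. fst p = 0 \<and> snd p > 0}"

lemma Vl_H3: "Vl \<subseteq> H3" unfolding Vl_def H3_def by auto

definition footV :: "complex \<times> real \<Rightarrow> complex \<times> real" where
  "footV p = (0, sqrt ((cmod (fst p))\<^sup>2 + (snd p)\<^sup>2))"

definition xV :: "complex \<times> real \<Rightarrow> real" where
  "xV p = (cmod (fst p) / snd p)\<^sup>2"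

lemma footV_Vl: "p \<in> H3 \<Longrightarrow> footV p \<in> Vl"
  unfolding footV_def Vl_def H3_def by (simp add: add_nonneg_pos)

lemma K_V:
  assumes "t > 0" "s > 0"
  shows "K (w,t) (0,s) = ((cmod w)\<^sup>2 + t\<^sup>2 + s\<^sup>2) / (2*t* s)"
  unfolding K_def Qd_def using assms by (simp add: field_simps power2_eq_square)

lemma K_V_ge:
  assumes "t > 0" "s > 0"
  shows "K (w,t) (0,s) - sqrt ((cmod w)\<^sup>2 + t\<^sup>2) / t = (sqrt ((cmod w)\<^sup>2 + t\<^sup>2) - s)\<^sup>2 / (2*t* s)"
proof -
  define R where "R = sqrt ((cmod w)\<^sup>2 + t\<^sup>2)"
  have R2: "R\<^sup>2 = (cmod w)\<^sup>2 + t\<^sup>2" unfolding R_def by simp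
  show ?thesis unfolding K_V[OF assms] R_def[symmetric] using assms R2
    by (simp add: field_simps power2_eq_square)
qed

lemma foot_K:
  assumes "p \<in> H3"
  shows "K p (footV p) = sqrt (1 + xV p)"
proof -
  obtain w t where p: "p = (w,t)" by fastforce
  have t: "t > 0" using assms p by (simp add: H3_def)
  define R where "R = sqrt ((cmod w)\<^sup>2 + t\<^sup>2)"
  have Rp: "R > 0" unfolding R_def using t by (simp add: add_nonneg_pos)
  have "K p (footV p) - R / t = 0"
    using K_V_ge[OF t Rp, of w] unfolding p footV_def R_def by simp
  then have "K p (footV p) = R / t" by simp
  also have "R / t = sqrt (1 + xV p)"
  proof -
    have "R / t = sqrt (R\<^sup>2 / t\<^sup>2)" using Rp t by (simp add: real_sqrt_divide)
    also have "R\<^sup>2 / t\<^sup>2 = 1 + xV p" unfolding R_def xV_def p using t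
      by (simp add: field_simps power2_eq_square)
    finally show ?thesis .
  qed
  finally show ?thesis .
qed

lemma foot_min:
  assumes "p \<in> H3" "v \<in> Vl"
  shows "K p (footV p) \<le> K p v" and "K p v = K p (footV p) \<Longrightarrow> v = footV p"
proof -
  obtain w t where p: "p = (w,t)" by fastforce
  obtain s where v: "v = (0,s)" and s: "s > 0" using assms(2) unfolding Vl_def by (cases v) auto
  have t: "t > 0" using assms p by (simp add: H3_def)
  define R where "R = sqrt ((cmod w)\<^sup>2 + t\<^sup>2)"
  have Rp: "R > 0" unfolding R_def using t by (simp add: add_nonneg_pos)
  have f: "K p (footV p) = R / t"
    using K_V_ge[OF t Rp, of w] unfolding p footV_def R_def by simp
  have g: "K p v - R / t = (R - s)\<^sup>2 / (2*t* s)"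
    using K_V_ge[OF t s, of w] unfolding p v R_def by simp
  show "K p (footV p) \<le> K p v" using f g t s by (smt (verit) divide_nonneg_pos mult_pos_pos zero_le_power2)
  show "v = footV p" if "K p v = K p (footV p)"
  proof -
    have "(R - s)\<^sup>2 / (2*t* s) = 0" using f g that by simp
    then have "R = s" using t s by simp
    then show ?thesis unfolding v footV_def p R_def by simp
  qed
qed

definition delta :: "complex \<times> real \<Rightarrow> real" where
  "delta p = hdist p (footV p)"

lemma delta_eq: "p \<in> H3 \<Longrightarrow> delta p = arcosh (sqrt (1 + xV p))"
  unfolding delta_def hdist_K using foot_K by simp

lemma xV_nonneg: "xV p \<ge> 0" unfolding xV_def by simp

lemma delta_less_iff: "p \<in> H3 \<Longrightarrow> q \<in> H3 \<Longrightarrow> delta p < delta q \<longleftrightarrow> xV p < xV q"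
  using xV_nonneg[of p] xV_nonneg[of q] by (simp add: delta_eq)

lemma delta_le: "p \<in> H3 \<Longrightarrow> v \<in> Vl \<Longrightarrow> delta p \<le> hdist p v"
  unfolding delta_def using foot_min hdist_le_iff footV_Vl Vl_H3 by blast

lemma delta_eq_foot: "p \<in> H3 \<Longrightarrow> v \<in> Vl \<Longrightarrow> hdist p v \<le> delta p \<Longrightarrow> v = footV p"
proof -
  assume a: "p \<in> H3" "v \<in> Vl" "hdist p v \<le> delta p"
  have "K p v \<le> K p (footV p)" using a hdist_le_iff[of p v p "footV p"] footV_Vl Vl_H3 unfolding delta_def by blast
  then have "K p v = K p (footV p)" using foot_min(1)[OF a(1,2)] by simp
  then show ?thesis using foot_min(2)[OF a(1,2)] by simp
qed




section \<open>The diagonal loxodromic\<close>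

lemma mob_diag:
  assumes "a \<noteq> 0"
  shows "mob_act (mk a 0 0 (1/a)) (w,t) = (a\<^sup>2 * w, (cmod a)\<^sup>2 * t)"
proof -
  have c: "complex_of_real ((cmod (1/a))\<^sup>2) = (1/a) * cnj (1/a)" by (rule complex_norm_square)
  have "a * w * cnj (1 / a) / complex_of_real ((cmod (1 / a))\<^sup>2) = a\<^sup>2 * w"
    unfolding c using assms by (simp add: field_simps power2_eq_square)
  moreover have "t / (cmod (1 / a))\<^sup>2 = (cmod a)\<^sup>2 * t" using assms by (simp add: norm_divide field_simps)
  ultimately show ?thesis unfolding mob_mk by simp
qed

lemma K_diag:
  assumes "a \<noteq> 0" "t > 0"
  shows "K (w,t) (mob_act (mk a 0 0 (1/a)) (w,t)) =
     (((cmod a)\<^sup>2)\<^sup>2 + 1 + (cmod (a\<^sup>2 - 1))\<^sup>2 * xV (w,t)) / (2 * (cmod a)\<^sup>2)"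
proof -
  have "a\<^sup>2 * w - w = (a\<^sup>2 - 1) * w" by (simp add: algebra_simps)
  then have n: "(cmod (w - a\<^sup>2 * w))\<^sup>2 = (cmod (a\<^sup>2 - 1))\<^sup>2 * (cmod w)\<^sup>2"
    by (metis norm_minus_commute norm_mult power_mult_distrib)
  have m: "cmod a > 0" using assms by simp
  show ?thesis unfolding mob_diag[OF assms(1)] K_def Qd_def xV_def fst_conv snd_conv n
    using assms m by (simp add: field_simps power2_eq_square)
qed

lemma disp_diag_less:
  assumes "a \<noteq> 0" "a\<^sup>2 \<noteq> 1" "p \<in> H3" "q \<in> H3" "xV p < xV q"
  shows "disp (mk a 0 0 (1/a)) p < disp (mk a 0 0 (1/a)) q"
proof -
  obtain w t where p: "p = (w,t)" by fastforce
  obtain y s where q: "q = (y,s)" by fastforce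
  have t: "t > 0" and s: "s > 0" using assms p q by (auto simp: H3_def)
  have al: "(cmod (a\<^sup>2 - 1))\<^sup>2 > 0" using assms by simp
  have m: "(cmod a)\<^sup>2 > 0" using assms by simp
  have H: "mob_act (mk a 0 0 (1/a)) p \<in> H3" "mob_act (mk a 0 0 (1/a)) q \<in> H3"
    using mob_H3 assms by (auto simp: field_simps)
  have "K p (mob_act (mk a 0 0 (1/a)) p) < K q (mob_act (mk a 0 0 (1/a)) q)"
    unfolding p q K_diag[OF assms(1) t] K_diag[OF assms(1) s]
    using assms(5) p q al m by (simp add: divide_strict_right_mono)
  then show ?thesis unfolding disp_def using hdist_less_iff assms H by blast
qed

lemma cosh_abs_real: "cosh \<bar>x::real\<bar> = cosh x"
  by (cases "x \<ge> 0") (simp_all add: abs_if)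

lemma hdist_vert: "s > 0 \<Longrightarrow> t > 0 \<Longrightarrow> hdist (0,s) (0,t) = \<bar>ln s - ln t\<bar>"
proof -
  assume s: "s > 0" and t: "t > 0"
  have "K (0,s) (0,t) = cosh (ln s - ln t)"
    unfolding K_def Qd_def cosh_def using s t
    by (simp add: exp_diff field_simps power2_eq_square)
  then have "hdist (0,s) (0,t) = arcosh (cosh \<bar>ln s - ln t\<bar>)"
    unfolding hdist_K by (simp add: cosh_abs_real)
  then show ?thesis by (metis abs_ge_zero arcosh_cosh_real)
qed

lemma Vl_geodesic: "geodesic_line Vl"
  unfolding geodesic_line_def
proof (intro exI[of _ "\<lambda>s. (0, exp s)"] conjI allI)
  fix s show "(0, exp s) \<in> H3" by (simp add: H3_def)
next
  fix s t show "hdist (0, exp s) (0, exp t) = \<bar>s - t\<bar>" by (simp add: hdist_vert)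
next
  show "Vl = range (\<lambda>s. (0::complex, exp s))"
  proof
    show "Vl \<subseteq> range (\<lambda>s. (0::complex, exp s))"
    proof
      fix p assume "p \<in> Vl"
      then have "p = (0, exp (ln (snd p)))" unfolding Vl_def by (cases p) auto
      then show "p \<in> range (\<lambda>s. (0::complex, exp s))" by blast
    qed
  qed (auto simp: Vl_def)
qed

lemma isom_R_surj:
  fixes f :: "real \<Rightarrow> real"
  assumes "\<And>s t. \<bar>f s - f t\<bar> = \<bar>s - t\<bar>"
  shows "\<exists>s. f s = y"
proof -
  define c where "c = f 0"
  define s where "s = y - c"
  have 1: "f s = c + s \<or> f s = c - s" using assms[of s 0] c_def by (auto simp: abs_if split: if_splits)
  have 2: "f (-s) = c + s \<or> f (-s) = c - s" using assms[of "-s" 0] c_def by (auto simp: abs_if split: if_splits)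
  show ?thesis
  proof (cases "f s = c + s")
    case True then show ?thesis using s_def by auto
  next
    case False
    then have fs: "f s = c - s" using 1 by simp
    show ?thesis
    proof (cases "f (-s) = c + s")
      case True then show ?thesis using s_def by auto
    next
      case False
      then have "f (-s) = c - s" using 2 by simp
      then have "\<bar>s - (-s)\<bar> = 0" using assms[of s "-s"] fs by simp
      then have "s = 0" by simp
      then show ?thesis using fs s_def by auto
    qed
  qed
qed

lemma key_identity:
  fixes m al be x :: real
  assumes "al + be = 2 * (m\<^sup>2 + 1)" "m > 0"
  shows "2 * ((m\<^sup>2 + 1 + al * x) / (2*m))\<^sup>2 - 1 - ((m\<^sup>2)\<^sup>2 + 1 + al * be * x) / (2 * m\<^sup>2)
       = al\<^sup>2 * (x + x\<^sup>2) / (2 * m\<^sup>2)"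
proof -
  have be: "be = 2 * (m\<^sup>2 + 1) - al" using assms by simp
  have m: "m \<noteq> 0" using assms by simp
  have "2 * ((m\<^sup>2 + 1 + al * x) / (2*m))\<^sup>2 = (m\<^sup>2 + 1 + al * x)\<^sup>2 / (2 * m\<^sup>2)"
    using m by (simp add: power_divide power2_eq_square)
  moreover have m4: "m ^ 4 = m*(m*(m*m))" by (simp add: eval_nat_numeral)
  ultimately show ?thesis unfolding be using m
    by (simp add: diff_divide_distrib[symmetric] add_divide_distrib[symmetric] divide_simps) (simp add: power2_eq_square algebra_simps m4)
qed

lemma diag_axis_unique:
  assumes a0: "a \<noteq> 0" and a1: "a\<^sup>2 \<noteq> 1" and am: "cmod a \<noteq> 1"
    and L: "geodesic_line L" and inv: "mob_act (mk a 0 0 (1/a)) ` L = L"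
  shows "L = Vl"
proof -
  define T where "T = mob_act (mk a 0 0 (1/a))"
  have detg: "det (mk a 0 0 (1/a)) = 1" using a0 by simp
  obtain \<gamma> where gH: "\<And>s. \<gamma> s \<in> H3" and gi: "\<And>s t. hdist (\<gamma> s) (\<gamma> t) = \<bar>s - t\<bar>" and Lr: "L = range \<gamma>"
    using L unfolding geodesic_line_def by blast
  have TL: "T x \<in> L" if "x \<in> L" for x using inv that T_def by blast
  define m where "m = (cmod a)\<^sup>2"
  have mp: "m > 0" unfolding m_def using a0 by simp
  have m1: "m \<noteq> 1"
  proof
    assume "m = 1"
    then have "sqrt ((cmod a)\<^sup>2) = 1" unfolding m_def by simp
    then show False using am by simp
  qed
  define al where "al = (cmod (a\<^sup>2 - 1))\<^sup>2"
  define be where "be = (cmod (a\<^sup>2 + 1))\<^sup>2"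
  have alp: "al > 0" unfolding al_def using a1 by simp
  have albe: "al + be = 2 * (m\<^sup>2 + 1)"
  proof -
    have "al + be = 2 * ((cmod (a\<^sup>2))\<^sup>2 + 1)" unfolding al_def be_def cmod_sq
      by (simp add: power2_eq_square algebra_simps)
    then show ?thesis unfolding m_def by (simp add: norm_mult power2_eq_square)
  qed
  have a2': "(cmod ((a\<^sup>2)\<^sup>2 - 1))\<^sup>2 = al * be"
  proof -
    have "(a\<^sup>2)\<^sup>2 - 1 = (a\<^sup>2 - 1) * (a\<^sup>2 + 1)" by (simp add: algebra_simps power2_eq_square)
    then show ?thesis unfolding al_def be_def by (simp add: norm_mult power_mult_distrib)
  qed
  have m2: "(cmod (a\<^sup>2))\<^sup>2 = m\<^sup>2" unfolding m_def by (simp add: norm_mult power2_eq_square)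
  have TT: "T (T (w,t)) = mob_act (mk (a\<^sup>2) 0 0 (1/a\<^sup>2)) (w,t)" for w t
    unfolding T_def mob_diag[OF a0] using a0 mob_diag[of "a\<^sup>2" w t]
    by (simp add: norm_mult power2_eq_square field_simps)
  have sub: "L \<subseteq> Vl"
  proof
    fix z assume zL: "z \<in> L"
    then obtain s0 where s0: "z = \<gamma> s0" using Lr by blast
    obtain s1 where s1: "T z = \<gamma> s1" using TL[OF zL] Lr by blast
    obtain s2 where s2: "T (T z) = \<gamma> s2" using TL[OF TL[OF zL]] Lr by blast
    have zH: "z \<in> H3" using s0 gH by simp
    obtain w t where z: "z = (w,t)" by fastforce
    have t: "t > 0" using zH z by (simp add: H3_def)
    have TzH: "T z \<in> H3" unfolding T_def using mob_H3[OF detg zH] .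
    have hh: "hdist (T z) (T (T z)) = hdist z (T z)" unfolding T_def using mob_isom[OF detg zH TzH] T_def by simp
    have "hdist (\<gamma> s1) (\<gamma> s2) = hdist (\<gamma> s0) (\<gamma> s1)" using hh s0 s1 s2 by metis
    then have e1: "\<bar>s1 - s2\<bar> = \<bar>s0 - s1\<bar>" by (simp add: gi)
    have ne: "s2 \<noteq> s0"
    proof
      assume "s2 = s0"
      then have "T (T z) = z" using s0 s2 by simp
      then have "(cmod (a\<^sup>2))\<^sup>2 * t = t" using TT[of w t] mob_diag[of "a\<^sup>2" w t] a0 z by simp
      then have "m\<^sup>2 = 1" using m2 t by simp
      then show False using m1 mp by (simp add: power2_eq_1_iff)
    qed
    have e2: "\<bar>s0 - s2\<bar> = 2 * \<bar>s0 - s1\<bar>" using e1 ne by (smt (verit))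
    define d where "d = hdist z (T z)"
    have d: "d = \<bar>s0 - s1\<bar>" unfolding d_def using s0 s1 gi by metis
    have d2: "hdist z (T (T z)) = 2 * d" using s0 s2 gi d e2 by metis
    have TTzH: "T (T z) \<in> H3" unfolding T_def using mob_H3[OF detg] TzH T_def by simp
    have K1: "K z (T z) = (m\<^sup>2 + 1 + al * xV z) / (2*m)"
      unfolding z T_def K_diag[OF a0 t] m_def al_def ..
    have K2: "K z (T (T z)) = ((m\<^sup>2)\<^sup>2 + 1 + al * be * xV z) / (2 * m\<^sup>2)"
    proof -
      have a20: "a\<^sup>2 \<noteq> 0" using a0 by simp
      show ?thesis unfolding z TT K_diag[OF a20 t] m2 a2' ..
    qed
    have "K z (T (T z)) = cosh (2 * d)" using cosh_hdist[OF zH TTzH] d2 by simp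
    also have "\<dots> = 2 * (cosh d)\<^sup>2 - 1" by (simp add: cosh_double cosh_square_eq)
    also have "cosh d = K z (T z)" unfolding d_def using cosh_hdist[OF zH TzH] .
    finally have "2 * (K z (T z))\<^sup>2 - 1 - K z (T (T z)) = 0" by simp
    then have "al\<^sup>2 * (xV z + (xV z)\<^sup>2) / (2 * m\<^sup>2) = 0"
      unfolding K1 K2 key_identity[OF albe mp] .
    then have "xV z + (xV z)\<^sup>2 = 0" using alp mp by simp
    then have "xV z = 0" using xV_nonneg[of z] by (smt (verit) zero_le_power2)
    then have "w = 0" unfolding xV_def z using t by simp
    then show "z \<in> Vl" unfolding Vl_def using z t by simp
  qed
  have "Vl \<subseteq> L"
  proof
    fix v assume v: "v \<in> Vl"
    define \<sigma> where "\<sigma> s = snd (\<gamma> s)" for s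
    define f where "f s = ln (\<sigma> s)" for s
    have gV: "\<gamma> s = (0, \<sigma> s)" "\<sigma> s > 0" for s
    proof -
      have "\<gamma> s \<in> Vl" using sub Lr by blast
      then show "\<gamma> s = (0, \<sigma> s)" "\<sigma> s > 0" unfolding Vl_def \<sigma>_def by (cases "\<gamma> s", simp)+
    qed
    have "\<bar>f s - f t\<bar> = \<bar>s - t\<bar>" for s t
    proof -
      have "\<bar>s - t\<bar> = hdist (0, \<sigma> s) (0, \<sigma> t)" using gi[of s t] unfolding gV(1) by simp
      also have "\<dots> = \<bar>f s - f t\<bar>" unfolding f_def using hdist_vert[OF gV(2) gV(2)] .
      finally show ?thesis by simp
    qed
    then obtain s where fs: "f s = ln (snd v)" using isom_R_surj by blast
    obtain \<tau> where v': "v = (0, \<tau>)" "\<tau> > 0" using v unfolding Vl_def by (cases v) auto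
    have "\<sigma> s = \<tau>" using fs gV(2)[of s] v' unfolding f_def by simp
    then have "\<gamma> s = v" using gV(1)[of s] v' by simp
    then show "v \<in> L" using Lr by blast
  qed
  with sub show ?thesis by blast
qed

lemma diag_inv_Vl:
  assumes a0: "a \<noteq> 0"
  shows "mob_act (mk a 0 0 (1/a)) ` Vl = Vl"
proof
  have m: "(cmod a)\<^sup>2 > 0" using a0 by simp
  show "mob_act (mk a 0 0 (1/a)) ` Vl \<subseteq> Vl"
    using m by (auto simp: Vl_def mob_diag[OF a0])
  show "Vl \<subseteq> mob_act (mk a 0 0 (1/a)) ` Vl"
  proof
    fix v assume v: "v \<in> Vl"
    then obtain \<tau> where v': "v = (0, \<tau>)" "\<tau> > 0" unfolding Vl_def by (cases v) auto
    have "mob_act (mk a 0 0 (1/a)) (0, \<tau> / (cmod a)\<^sup>2) = v" using m v' by (simp add: mob_diag[OF a0])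
    moreover have "(0, \<tau> / (cmod a)\<^sup>2) \<in> Vl" using m v' by (simp add: Vl_def)
    ultimately show "v \<in> mob_act (mk a 0 0 (1/a)) ` Vl" by blast
  qed
qed

lemma diag_axis:
  assumes "a \<noteq> 0" "a\<^sup>2 \<noteq> 1" "cmod a \<noteq> 1"
  shows "\<exists>!L. geodesic_line L \<and> mob_act (mk a 0 0 (1/a)) ` L = L"
    and "axis (mk a 0 0 (1/a)) = Vl"
proof -
  show ex: "\<exists>!L. geodesic_line L \<and> mob_act (mk a 0 0 (1/a)) ` L = L"
    using Vl_geodesic diag_inv_Vl[OF assms(1)] diag_axis_unique[OF assms] by blast
  show "axis (mk a 0 0 (1/a)) = Vl" unfolding axis_def
  proof (rule the_equality)
    show "geodesic_line Vl \<and> mob_act (mk a 0 0 (1/a)) ` Vl = Vl"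
      using Vl_geodesic diag_inv_Vl[OF assms(1)] by blast
  next
    fix L assume "geodesic_line L \<and> mob_act (mk a 0 0 (1/a)) ` L = L"
    then show "L = Vl" using diag_axis_unique[OF assms] by blast
  qed
qed




lemma geo_H3: "geodesic_line L \<Longrightarrow> L \<subseteq> H3"
  unfolding geodesic_line_def by auto

lemma geo_image:
  assumes M: "det M = 1" and L: "geodesic_line L"
  shows "geodesic_line (mob_act M ` L)"
proof -
  obtain \<gamma> where gH: "\<And>s. \<gamma> s \<in> H3" and gi: "\<And>s t. hdist (\<gamma> s) (\<gamma> t) = \<bar>s - t\<bar>" and Lr: "L = range \<gamma>"
    using L unfolding geodesic_line_def by blast
  show ?thesis unfolding geodesic_line_def
  proof (intro exI[of _ "\<lambda>s. mob_act M (\<gamma> s)"] conjI allI)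
    fix s show "mob_act M (\<gamma> s) \<in> H3" using mob_H3[OF M gH] .
  next
    fix s t show "hdist (mob_act M (\<gamma> s)) (mob_act M (\<gamma> t)) = \<bar>s - t\<bar>"
      using mob_isom[OF M gH gH] gi by simp
  next
    show "mob_act M ` L = range (\<lambda>s. mob_act M (\<gamma> s))" using Lr by auto
  qed
qed

lemma inv_image_cancel:
  assumes "det M = 1" "S \<subseteq> H3"
  shows "mob_act (matrix_inv M) ` mob_act M ` S = S" "mob_act M ` mob_act (matrix_inv M) ` S = S"
proof -
  have "mob_act (matrix_inv M) (mob_act M p) = p" "mob_act M (mob_act (matrix_inv M) p) = p" if "p \<in> S" for p
  proof -
    have pH: "p \<in> H3" using that assms(2) by blast
    show "mob_act (matrix_inv M) (mob_act M p) = p" "mob_act M (mob_act (matrix_inv M) p) = p"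
      using mob_inv[OF assms(1) pH] by simp_all
  qed
  then have "(\<lambda>p. mob_act (matrix_inv M) (mob_act M p)) ` S = (\<lambda>p. p) ` S"
     "(\<lambda>p. mob_act M (mob_act (matrix_inv M) p)) ` S = (\<lambda>p. p) ` S"
    by (auto intro!: image_cong)
  then show "mob_act (matrix_inv M) ` mob_act M ` S = S" "mob_act M ` mob_act (matrix_inv M) ` S = S"
    by (simp_all only: image_image image_ident)
qed

lemma image_H3: "det M = 1 \<Longrightarrow> S \<subseteq> H3 \<Longrightarrow> mob_act M ` S \<subseteq> H3"
  using mob_H3 by blast

lemma conj_image:
  assumes M: "det M = 1" and X: "det X = 1" and S: "S \<subseteq> H3"
  shows "mob_act (M ** X ** matrix_inv M) ` S = mob_act M ` mob_act X ` mob_act (matrix_inv M) ` S"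
proof -
  have Mi: "det (matrix_inv M) = 1" using inv_props[OF M] by simp
  have "mob_act (M ** X ** matrix_inv M) p = mob_act M (mob_act X (mob_act (matrix_inv M) p))" if "p \<in> S" for p
  proof -
    have pH: "p \<in> H3" using that S by blast
    have "mob_act (M ** X ** matrix_inv M) p = mob_act (M ** X) (mob_act (matrix_inv M) p)"
      using mob_comp[OF det_mult1[OF M X] Mi pH] .
    also have "\<dots> = mob_act M (mob_act X (mob_act (matrix_inv M) p))"
      using mob_comp[OF M X mob_H3[OF Mi pH]] .
    finally show ?thesis .
  qed
  then have "mob_act (M ** X ** matrix_inv M) ` S = (\<lambda>p. mob_act M (mob_act X (mob_act (matrix_inv M) p))) ` S"
    by (rule image_cong[OF refl])
  then show ?thesis by (simp only: image_image)
qed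

lemma conj_pred:
  assumes M: "det M = 1" and X: "det X = 1" and S: "S \<subseteq> H3"
  shows "mob_act (M ** X ** matrix_inv M) ` S = S \<longleftrightarrow>
         mob_act X ` (mob_act (matrix_inv M) ` S) = mob_act (matrix_inv M) ` S"
proof -
  have Mi: "det (matrix_inv M) = 1" using inv_props[OF M] by simp
  define S' where "S' = mob_act (matrix_inv M) ` S"
  have S'H: "S' \<subseteq> H3" unfolding S'_def using image_H3[OF Mi S] .
  have XS'H: "mob_act X ` S' \<subseteq> H3" using image_H3[OF X S'H] .
  have e: "mob_act (M ** X ** matrix_inv M) ` S = mob_act M ` mob_act X ` S'"
    unfolding S'_def using conj_image[OF M X S] .
  show ?thesis unfolding e S'_def[symmetric]
  proof
    assume "mob_act M ` mob_act X ` S' = S"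
    then have "mob_act (matrix_inv M) ` mob_act M ` mob_act X ` S' = S'" unfolding S'_def by simp
    then show "mob_act X ` S' = S'" using inv_image_cancel(1)[OF M XS'H] by simp
  next
    assume "mob_act X ` S' = S'"
    then show "mob_act M ` mob_act X ` S' = S" unfolding S'_def using inv_image_cancel(2)[OF M S] by simp
  qed
qed

lemma axis_conj:
  assumes M: "det M = 1" and X: "det X = 1"
    and u: "\<exists>!L. geodesic_line L \<and> mob_act X ` L = L"
  shows "\<exists>!L. geodesic_line L \<and> mob_act (M ** X ** matrix_inv M) ` L = L"
    and "axis (M ** X ** matrix_inv M) = mob_act M ` axis X"
proof -
  have Mi: "det (matrix_inv M) = 1" using inv_props[OF M] by simp
  define A where "A = axis X"
  have A0: "geodesic_line A \<and> mob_act X ` A = A" using theI'[OF u] unfolding A_def axis_def .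
  have A: "geodesic_line A" "mob_act X ` A = A" using A0 by simp_all
  have Au: "L = A" if "geodesic_line L" "mob_act X ` L = L" for L
  proof -
    have "geodesic_line L \<and> mob_act X ` L = L" using that by simp
    then show ?thesis unfolding A_def axis_def by (rule the1_equality[OF u, symmetric])
  qed
  have AH: "A \<subseteq> H3" using geo_H3[OF A(1)] .
  have P1: "geodesic_line (mob_act M ` A) \<and> mob_act (M ** X ** matrix_inv M) ` (mob_act M ` A) = mob_act M ` A"
  proof
    show "geodesic_line (mob_act M ` A)" using geo_image[OF M A(1)] .
    show "mob_act (M ** X ** matrix_inv M) ` (mob_act M ` A) = mob_act M ` A"
      using conj_pred[OF M X image_H3[OF M AH]] inv_image_cancel(1)[OF M AH] A(2) by simp
  qed
  have P2: "L = mob_act M ` A" if "geodesic_line L" "mob_act (M ** X ** matrix_inv M) ` L = L" for L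
  proof -
    have LH: "L \<subseteq> H3" using geo_H3[OF that(1)] .
    have "mob_act X ` (mob_act (matrix_inv M) ` L) = mob_act (matrix_inv M) ` L"
      using conj_pred[OF M X LH] that(2) by simp
    moreover have "geodesic_line (mob_act (matrix_inv M) ` L)" using geo_image[OF Mi that(1)] .
    ultimately have "mob_act (matrix_inv M) ` L = A" by (rule Au[rotated])
    then have "mob_act M ` mob_act (matrix_inv M) ` L = mob_act M ` A" by simp
    then show ?thesis using inv_image_cancel(2)[OF M LH] by simp
  qed
  show ex: "\<exists>!L. geodesic_line L \<and> mob_act (M ** X ** matrix_inv M) ` L = L"
  proof (rule ex1I)
    show "geodesic_line (mob_act M ` A) \<and> mob_act (M ** X ** matrix_inv M) ` (mob_act M ` A) = mob_act M ` A"
      by (rule P1)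
  next
    fix L assume "geodesic_line L \<and> mob_act (M ** X ** matrix_inv M) ` L = L"
    then show "L = mob_act M ` A" using P2 by simp
  qed
  show "axis (M ** X ** matrix_inv M) = mob_act M ` axis X"
    unfolding axis_def[of "M ** X ** matrix_inv M"] A_def[symmetric]
    by (rule the1_equality[OF ex P1])
qed

section \<open>Diagonalising a loxodromic\<close>

lemma in_I: "\<bar>x\<bar> \<le> 2 \<Longrightarrow> complex_of_real x \<in> complex_of_real ` {-2..2}"
  by (rule imageI) auto

lemma quad_root_props:
  assumes r: "a*a - \<tau>*a + 1 = 0" and tau: "\<tau> \<notin> complex_of_real ` {-2..2}"
  shows "a \<noteq> 0" "a\<^sup>2 \<noteq> 1" "cmod a \<noteq> 1"
proof -
  show a0: "a \<noteq> 0" using r by auto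
  show "a\<^sup>2 \<noteq> 1"
  proof
    assume "a\<^sup>2 = 1"
    then have "a = 1 \<or> a = -1" by (simp add: power2_eq_1_iff)
    moreover have te: "\<tau> = (a*a + 1) / a" using r a0 by (simp add: field_simps algebra_simps)
    ultimately have "\<tau> = 2 \<or> \<tau> = -2" by auto
    moreover have "complex_of_real 2 \<in> complex_of_real ` {-2..2}" "complex_of_real (-2) \<in> complex_of_real ` {-2..2}"
      by (rule imageI, simp)+
    ultimately show False using tau by auto
  qed
  show "cmod a \<noteq> 1"
  proof
    assume m: "cmod a = 1"
    have ac: "a * cnj a = 1" using m complex_norm_square[of a] by simp
    have "\<tau> * a = a * a + 1" using r by (simp add: algebra_simps)
    also have "\<dots> = a * (a + cnj a)" using ac by (simp add: algebra_simps)
    finally have "\<tau> = a + cnj a" using a0 by (simp add: mult.commute)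
    then have te: "\<tau> = complex_of_real (2 * Re a)" by (simp add: complex_add_cnj)
    have "\<bar>Re a\<bar> \<le> 1" using abs_Re_le_cmod[of a] m by simp
    then have t2: "\<bar>2 * Re a\<bar> \<le> 2" by simp
    have "\<tau> \<in> complex_of_real ` {-2..2}" using in_I[OF t2] unfolding te[symmetric] .
    then show False using tau by simp
  qed
qed

lemma quad_root_exists: "\<exists>a::complex. a*a - \<tau>*a + 1 = 0"
proof -
  define b where "b = \<tau> + csqrt (\<tau>\<^sup>2 - 4)"
  define a where "a = b / 2"
  have s2: "csqrt (\<tau>\<^sup>2 - 4) * csqrt (\<tau>\<^sup>2 - 4) = \<tau>*\<tau> - 4" by (simp add: power2_eq_square[symmetric])
  have "b*b - 2*\<tau>*b + 4 = 0" unfolding b_def using s2 by algebra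
  then have "a*a - \<tau>*a + 1 = 0" unfolding a_def by (simp add: field_simps)
  then show ?thesis by blast
qed

lemma lox_diag:
  assumes d: "det g = 1" and tau: "trace g \<notin> complex_of_real ` {-2..2}"
  shows "\<exists>P a. det P = 1 \<and> a \<noteq> 0 \<and> a\<^sup>2 \<noteq> 1 \<and> cmod a \<noteq> 1 \<and> g ** P = P ** mk a 0 0 (1/a)"
proof -
  obtain \<alpha> \<beta> \<gamma> \<delta> where g: "g = mk \<alpha> \<beta> \<gamma> \<delta>" by (rule mk_cases)
  have dg: "\<alpha>*\<delta> - \<beta>*\<gamma> = 1" using d g by simp
  define \<tau> where "\<tau> = \<alpha> + \<delta>"
  have tau': "\<tau> \<notin> complex_of_real ` {-2..2}" using tau g \<tau>_def by simp
  show ?thesis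
  proof (cases "\<beta> = 0 \<and> \<gamma> = 0")
    case True
    have r: "\<alpha>*\<alpha> - \<tau>*\<alpha> + 1 = 0" using dg True unfolding \<tau>_def by (simp add: algebra_simps)
    note pr = quad_root_props[OF r tau']
    have "\<delta> = 1/\<alpha>" using dg True pr(1) by (simp add: field_simps)
    then have "g ** mat 1 = mat 1 ** mk \<alpha> 0 0 (1/\<alpha>)" using g True by (simp add: mat1_mk)
    moreover have "det (mat 1 :: complex^2^2) = 1" by simp
    ultimately show ?thesis using pr by blast
  next
    case False
    obtain a where r: "a*a - \<tau>*a + 1 = 0" using quad_root_exists by blast
    note pr = quad_root_props[OF r tau']
    define ai where "ai = 1/a"
    have aai: "a * ai = 1" unfolding ai_def using pr(1) by simp
    have ane: "a - ai \<noteq> 0"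
    proof
      assume "a - ai = 0"
      then have "a * a = 1" using aai by simp
      then show False using pr(2) by (simp add: power2_eq_square)
    qed
    show ?thesis
    proof (cases "\<beta> = 0")
      case False
      define k where "k = \<beta> * (ai - a)"
      have k0: "k \<noteq> 0" unfolding k_def using False ane by (simp add: right_diff_distrib)
      define ki where "ki = 1/k"
      have kki: "k * ki = 1" unfolding ki_def using k0 by simp
      define P where "P = mk \<beta> (\<beta>*ki) (a-\<alpha>) ((ai-\<alpha>)*ki)"
      have dP: "det P = 1" unfolding P_def using kki unfolding k_def by (simp add: algebra_simps)
      have "g ** P = P ** mk a 0 0 ai"
        unfolding g P_def mk_mult mk_inject
        using r aai kki dg unfolding \<tau>_def k_def by algebra
      then show ?thesis using dP pr unfolding ai_def by blast
    next
      case True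
      then have g0: "\<gamma> \<noteq> 0" using \<open>\<not> (\<beta> = 0 \<and> \<gamma> = 0)\<close> by simp
      define k where "k = \<gamma> * (a - ai)"
      have k0: "k \<noteq> 0" unfolding k_def using g0 ane by simp
      define ki where "ki = 1/k"
      have kki: "k * ki = 1" unfolding ki_def using k0 by simp
      define P where "P = mk (a-\<delta>) ((ai-\<delta>)*ki) \<gamma> (\<gamma>*ki)"
      have dP: "det P = 1" unfolding P_def using kki unfolding k_def by (simp add: algebra_simps)
      have "g ** P = P ** mk a 0 0 ai"
        unfolding g P_def mk_mult mk_inject
        using r aai kki dg True unfolding \<tau>_def k_def by algebra
      then show ?thesis using dP pr unfolding ai_def by blast
    qed
  qed
qed

section \<open>Fixed points force elliptic/parabolic trace\<close>

lemma fix_e0: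
  assumes d: "\<alpha>*\<delta> - \<beta>*\<gamma> = 1" and f: "mob_act (mk \<alpha> \<beta> \<gamma> \<delta>) e0 = e0"
  shows "\<alpha> + \<delta> \<in> complex_of_real ` {-2..2}"
proof -
  define D where "D = (cmod \<delta>)\<^sup>2 + (cmod \<gamma>)\<^sup>2"
  have Dp: "D > 0" unfolding D_def using Dpos[OF d, of 1 0] by simp
  have m: "mob_act (mk \<alpha> \<beta> \<gamma> \<delta>) e0 = ((\<beta> * cnj \<delta> + \<alpha> * cnj \<gamma>) / complex_of_real D, 1 / D)"
    unfolding e0_def mob_mk D_def by simp
  have D1: "D = 1" using f m Dp unfolding e0_def by simp
  have N0: "\<beta> * cnj \<delta> + \<alpha> * cnj \<gamma> = 0" using f m D1 unfolding e0_def by simp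
  have cD: "\<delta> * cnj \<delta> + \<gamma> * cnj \<gamma> = 1"
    using D1 unfolding D_def using complex_norm_square[of \<delta>] complex_norm_square[of \<gamma>]
    by (metis of_real_1 of_real_add)
  have "\<alpha> = cnj \<delta>" using d N0 cD by algebra
  then have tr: "\<alpha> + \<delta> = complex_of_real (2 * Re \<delta>)" by (simp add: complex_eq_iff)
  have "(cmod \<delta>)\<^sup>2 \<le> 1" using D1 unfolding D_def by (smt (verit) zero_le_power2)
  then have "cmod \<delta> \<le> 1" by (simp add: power_le_one_iff)
  then have "\<bar>Re \<delta>\<bar> \<le> 1" using abs_Re_le_cmod[of \<delta>] by simp
  then show ?thesis unfolding tr by (intro in_I) simp
qed

lemma fixpt_trace:
  assumes M: "det M = 1" and p: "p \<in> H3" and f: "mob_act M p = p"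
  shows "trace M \<in> complex_of_real ` {-2..2}"
proof -
  obtain w t where pw: "p = (w,t)" by fastforce
  have t: "t > 0" using p pw by (simp add: H3_def)
  define r where "r = complex_of_real (sqrt t)"
  have r0: "r \<noteq> 0" unfolding r_def using t by simp
  have rr: "r * cnj r = complex_of_real t"
  proof -
    have "sqrt t * sqrt t = t" using t by simp
    then show ?thesis unfolding r_def by (metis complex_cnj_complex_of_real of_real_mult)
  qed
  define S where "S = mk r (w / r) 0 (1 / r)"
  have dS: "det S = 1" unfolding S_def using r0 by simp
  have Se: "mob_act S e0 = p"
  proof -
    have c: "(cmod (1 / r))\<^sup>2 = 1 / t" unfolding r_def using t by (simp add: norm_divide power_divide)
    have "w / r * cnj (1 / r) / complex_of_real (1 / t) = w"
      using rr r0 t by (simp add: field_simps)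
    moreover have "mob_act S e0 = (w / r * cnj (1 / r) / complex_of_real ((cmod (1 / r))\<^sup>2), 1 / (cmod (1 / r))\<^sup>2)"
      unfolding S_def e0_def mob_mk by simp
    ultimately show ?thesis unfolding pw c using t by simp
  qed
  define Si where "Si = matrix_inv S"
  have dSi: "det Si = 1" unfolding Si_def using inv_props[OF dS] by simp
  define M' where "M' = Si ** M ** S"
  have dM': "det M' = 1" unfolding M'_def using dSi M dS by (simp add: det_mul)
  have "mob_act M' e0 = mob_act Si (mob_act M (mob_act S e0))"
    unfolding M'_def using mob_comp[OF det_mult1[OF dSi M] dS e0_H3] mob_comp[OF dSi M] mob_H3[OF dS e0_H3] by simp
  also have "\<dots> = e0" unfolding Se f Si_def using mob_inv(1)[OF dS e0_H3] Se by simp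
  finally have fe: "mob_act M' e0 = e0" .
  have tr: "trace M' = trace M"
  proof -
    have "trace M' = trace (S ** (Si ** M))" unfolding M'_def by (rule trace_mul_sym)
    also have "S ** (Si ** M) = (S ** Si) ** M" by (simp only: matrix_mul_assoc)
    also have "S ** Si = mat 1" unfolding Si_def using inv_props(2)[OF dS] .
    finally show ?thesis by simp
  qed
  obtain \<alpha> \<beta> \<gamma> \<delta> where M': "M' = mk \<alpha> \<beta> \<gamma> \<delta>" by (rule mk_cases)
  have "\<alpha> + \<delta> \<in> complex_of_real ` {-2..2}" using fix_e0[of \<alpha> \<delta> \<beta> \<gamma>] dM' fe M' by simp
  then show ?thesis using tr M' by simp
qed

lemma trace_sq: "det (h::complex^2^2) = 1 \<Longrightarrow> trace (h ** h) = (trace h)\<^sup>2 - 2"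
proof -
  assume d: "det h = 1"
  obtain a b c e where h: "h = mk a b c e" by (rule mk_cases)
  have "a*e - b*c = 1" using d h by simp
  then show ?thesis unfolding h by (simp add: power2_eq_square algebra_simps)
qed

lemma sq_trace_real:
  assumes "z\<^sup>2 - 2 \<in> complex_of_real ` {-2..2}"
  shows "z \<in> complex_of_real ` {-2..2}"
proof -
  obtain r where r: "z\<^sup>2 - 2 = complex_of_real r" "-2 \<le> r" "r \<le> 2" using assms by auto
  have z2: "z\<^sup>2 = complex_of_real (r + 2)" using r(1) by (metis diff_add_cancel of_real_add of_real_numeral)
  have im: "Im (z\<^sup>2) = 0" unfolding z2 by simp
  have re: "Re (z\<^sup>2) = r + 2" unfolding z2 by simp
  have xy: "2 * Re z * Im z = 0" using im by (auto simp: power2_eq_square)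
  have sq: "(Re z)\<^sup>2 - (Im z)\<^sup>2 = r + 2" using re by (simp add: power2_eq_square)
  have iz: "Im z = 0"
  proof (cases "Re z = 0")
    case True
    then have "- (Im z)\<^sup>2 = r + 2" using sq by simp
    then have "(Im z)\<^sup>2 \<le> 0" using r(2) by linarith
    then show ?thesis by (smt (verit) zero_le_power2 zero_eq_power2)
  next
    case False
    then show ?thesis using xy by simp
  qed
  then have rz: "(Re z)\<^sup>2 \<le> 2\<^sup>2" using sq r(3) by simp
  have "\<bar>Re z\<bar> \<le> 2" using abs_le_square_iff[of "Re z" 2] rz by simp
  moreover have "z = complex_of_real (Re z)" using iz by (simp add: complex_eq_iff)
  ultimately show ?thesis using in_I[of "Re z"] by simp
qed

lemma lox_no_fix2:
  assumes h: "det h = 1" and lox: "trace h \<notin> complex_of_real ` {-2..2}" and p: "p \<in> H3"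
    and f: "mob_act h (mob_act h p) = p"
  shows False
proof -
  have "mob_act (h ** h) p = p" using mob_comp[OF h h p] f by simp
  then have "trace (h ** h) \<in> complex_of_real ` {-2..2}" using fixpt_trace[OF det_mult1[OF h h] p] by simp
  then show False using trace_sq[OF h] sq_trace_real lox by metis
qed




section \<open>An element preserving the vertical line commutes with the diagonal one\<close>

lemma fst_mob_V:
  assumes d: "\<alpha>*\<delta> - \<beta>*\<gamma> = 1" and t: "\<tau> > 0"
  shows "fst (mob_act (mk \<alpha> \<beta> \<gamma> \<delta>) (0,\<tau>)) = 0 \<longleftrightarrow> \<beta> * cnj \<delta> + \<alpha> * cnj \<gamma> * complex_of_real (\<tau>\<^sup>2) = 0"
proof -
  define D where "D = (cmod (\<gamma> * 0 + \<delta>))\<^sup>2 + (cmod \<gamma>)\<^sup>2 * \<tau>\<^sup>2"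
  have D: "D > 0" unfolding D_def using Dpos[OF d t] .
  have e: "fst (mob_act (mk \<alpha> \<beta> \<gamma> \<delta>) (0,\<tau>)) = (\<beta> * cnj \<delta> + \<alpha> * cnj \<gamma> * complex_of_real (\<tau>\<^sup>2)) / complex_of_real D"
    unfolding mob_mk D_def by simp
  have "complex_of_real D \<noteq> 0" using D by simp
  then show ?thesis unfolding e by simp
qed

lemma h_not_pres:
  assumes dh: "det h = 1" and a0: "a \<noteq> 0" and nc: "\<not> psl_commute (mk a 0 0 (1/a)) h"
    and lox: "trace h \<notin> complex_of_real ` {-2..2}"
  shows "\<not> (mob_act h ` Vl \<subseteq> Vl)"
proof
  assume sub: "mob_act h ` Vl \<subseteq> Vl"
  obtain \<alpha> \<beta> \<gamma> \<delta> where h: "h = mk \<alpha> \<beta> \<gamma> \<delta>" by (rule mk_cases)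
  have d: "\<alpha>*\<delta> - \<beta>*\<gamma> = 1" using dh h by simp
  have z: "\<beta> * cnj \<delta> + \<alpha> * cnj \<gamma> * complex_of_real (\<tau>\<^sup>2) = 0" if t: "\<tau> > 0" for \<tau>
  proof -
    have "(0, \<tau>) \<in> Vl" using t by (simp add: Vl_def)
    then have "mob_act h (0,\<tau>) \<in> Vl" using sub by blast
    then have "fst (mob_act (mk \<alpha> \<beta> \<gamma> \<delta>) (0,\<tau>)) = 0" using h by (simp add: Vl_def)
    then show ?thesis using fst_mob_V[OF d t] by simp
  qed
  have z1: "\<beta> * cnj \<delta> + \<alpha> * cnj \<gamma> = 0" using z[of 1] by simp
  have z2: "\<beta> * cnj \<delta> + \<alpha> * cnj \<gamma> * 4 = 0" using z[of 2] by simp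
  have Q: "\<alpha> * cnj \<gamma> = 0" using z1 z2 by algebra
  have P: "\<beta> * cnj \<delta> = 0" using z1 Q by simp
  show False
  proof (cases "\<beta> = 0")
    case True
    then have "\<alpha> \<noteq> 0" using d by auto
    then have "\<gamma> = 0" using Q by simp
    then have "mk a 0 0 (1/a) ** h = h ** mk a 0 0 (1/a)" using h True by (simp add: mult.commute)
    then show False using nc unfolding psl_commute_def by simp
  next
    case False
    then have "\<delta> = 0" using P by simp
    then have "\<gamma> \<noteq> 0" using d by auto
    then have "\<alpha> = 0" using Q by simp
    then have "trace h = complex_of_real 0" using h \<open>\<delta> = 0\<close> by simp
    moreover have "complex_of_real 0 \<in> complex_of_real ` {-2..2}" by (rule imageI) simp
    ultimately show False using lox by simp
  qed
qed

section \<open>Uniqueness of the common perpendicular\<close>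

lemma cmod_add_real_mult:
  "(cmod (x + y * complex_of_real u))\<^sup>2 = (cmod x)\<^sup>2 + 2*u*Re (x * cnj y) + u\<^sup>2 * (cmod y)\<^sup>2"
  unfolding cmod_sq by (simp add: power2_eq_square algebra_simps)

lemma minpair_props:
  assumes dM: "det M = 1" and v: "v \<in> Vl" and c: "c \<in> mob_act M ` Vl"
    and mn: "\<forall>v'\<in>Vl. \<forall>c'\<in>mob_act M ` Vl. hdist v c \<le> hdist v' c'"
  shows "v = footV c" and "\<And>c'. c' \<in> mob_act M ` Vl \<Longrightarrow> xV c \<le> xV c'"
proof -
  have cH: "c \<in> H3" using c image_H3[OF dM Vl_H3] by blast
  have vH: "v \<in> H3" using v Vl_H3 by blast
  have "hdist v c \<le> hdist (footV c) c" using mn footV_Vl[OF cH] c by blast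
  then have "hdist c v \<le> delta c" unfolding delta_def by (metis hdist_sym)
  then show "v = footV c" using delta_eq_foot[OF cH v] by simp
  fix c' assume c': "c' \<in> mob_act M ` Vl"
  have c'H: "c' \<in> H3" using c' image_H3[OF dM Vl_H3] by blast
  have "delta c \<le> hdist c v" using delta_le[OF cH v] .
  also have "\<dots> = hdist v c" by (rule hdist_sym)
  also have "\<dots> \<le> hdist (footV c') c'" using mn footV_Vl[OF c'H] c' by blast
  also have "\<dots> = delta c'" unfolding delta_def by (rule hdist_sym)
  finally have "delta c \<le> delta c'" .
  then show "xV c \<le> xV c'" using delta_less_iff[OF c'H cH] by linarith
qed

lemma xV_img:
  assumes d: "\<alpha>*\<delta> - \<beta>*\<gamma> = 1" and t: "\<tau> > 0"
  shows "xV (mob_act (mk \<alpha> \<beta> \<gamma> \<delta>) (0,\<tau>)) =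
     (cmod (\<beta> * cnj \<delta>))\<^sup>2 / \<tau>\<^sup>2 + 2 * Re ((\<beta> * cnj \<delta>) * cnj (\<alpha> * cnj \<gamma>)) + (cmod (\<alpha> * cnj \<gamma>))\<^sup>2 * \<tau>\<^sup>2"
proof -
  define D where "D = (cmod (\<gamma> * 0 + \<delta>))\<^sup>2 + (cmod \<gamma>)\<^sup>2 * \<tau>\<^sup>2"
  have Dp: "D > 0" unfolding D_def using Dpos[OF d t] .
  define N where "N = \<beta> * cnj \<delta> + \<alpha> * cnj \<gamma> * complex_of_real (\<tau>\<^sup>2)"
  have m: "mob_act (mk \<alpha> \<beta> \<gamma> \<delta>) (0,\<tau>) = (N / complex_of_real D, \<tau> / D)"
    unfolding mob_mk N_def D_def by simp
  have "xV (mob_act (mk \<alpha> \<beta> \<gamma> \<delta>) (0,\<tau>)) = (cmod N)\<^sup>2 / \<tau>\<^sup>2"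
    unfolding m xV_def using Dp t by (simp add: norm_divide power_divide)
  also have "\<dots> = ((cmod (\<beta> * cnj \<delta>))\<^sup>2 + 2 * \<tau>\<^sup>2 * Re ((\<beta> * cnj \<delta>) * cnj (\<alpha> * cnj \<gamma>)) + (\<tau>\<^sup>2)\<^sup>2 * (cmod (\<alpha> * cnj \<gamma>))\<^sup>2) / \<tau>\<^sup>2"
    unfolding N_def cmod_add_real_mult ..
  also have "\<dots> = (cmod (\<beta> * cnj \<delta>))\<^sup>2 / \<tau>\<^sup>2 + 2 * Re ((\<beta> * cnj \<delta>) * cnj (\<alpha> * cnj \<gamma>)) + (cmod (\<alpha> * cnj \<gamma>))\<^sup>2 * \<tau>\<^sup>2"
    using t by (simp add: field_simps power2_eq_square)
  finally show ?thesis .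
qed

lemma G_min:
  fixes p q u :: real
  assumes p: "p > 0" and q: "q > 0" and u: "u > 0" and le: "p\<^sup>2 / u + q\<^sup>2 * u \<le> 2 * p * q"
  shows "u = p / q"
proof -
  have "p\<^sup>2 / u + q\<^sup>2 * u - 2 * p * q = (p - q * u)\<^sup>2 / u"
    using u by (simp add: field_simps power2_eq_square)
  then have "(p - q * u)\<^sup>2 / u \<le> 0" using le by simp
  then have "(p - q * u)\<^sup>2 \<le> 0" using u by (simp add: divide_le_0_iff)
  then have "p = q * u" by simp
  then show ?thesis using q by (simp add: field_simps)
qed

lemma perp_unique:
  assumes dM: "det M = 1" and np: "\<not> (mob_act M ` Vl \<subseteq> Vl)"
    and v1: "v1 \<in> Vl" and c1: "c1 \<in> mob_act M ` Vl" and v2: "v2 \<in> Vl" and c2: "c2 \<in> mob_act M ` Vl"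
    and mn1: "\<forall>v'\<in>Vl. \<forall>c'\<in>mob_act M ` Vl. hdist v1 c1 \<le> hdist v' c'"
    and mn2: "\<forall>v'\<in>Vl. \<forall>c'\<in>mob_act M ` Vl. hdist v2 c2 \<le> hdist v' c'"
  shows "v1 = v2 \<and> c1 = c2"
proof -
  obtain \<alpha> \<beta> \<gamma> \<delta> where M: "M = mk \<alpha> \<beta> \<gamma> \<delta>" by (rule mk_cases)
  have d: "\<alpha>*\<delta> - \<beta>*\<gamma> = 1" using dM M by simp
  define p where "p = cmod (\<beta> * cnj \<delta>)"
  define q where "q = cmod (\<alpha> * cnj \<gamma>)"
  define R where "R = Re ((\<beta> * cnj \<delta>) * cnj (\<alpha> * cnj \<gamma>))"
  have xe: "xV (mob_act M (0,\<tau>)) = p\<^sup>2 / \<tau>\<^sup>2 + 2 * R + q\<^sup>2 * \<tau>\<^sup>2" if "\<tau> > 0" for \<tau>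
    unfolding M p_def q_def R_def using xV_img[OF d that] .
  have imgV: "mob_act M (0,\<tau>) \<in> mob_act M ` Vl" if "\<tau> > 0" for \<tau>
    using that by (intro imageI) (simp add: Vl_def)
  have pq: "p > 0 \<and> q > 0"
  proof (rule ccontr)
    assume "\<not> (p > 0 \<and> q > 0)"
    then have pq0: "p = 0 \<or> q = 0" unfolding p_def q_def by auto
    obtain \<tau>1 where \<tau>1: "c1 = mob_act M (0,\<tau>1)" "\<tau>1 > 0" using c1 unfolding Vl_def by auto
    have mn: "xV c1 \<le> xV (mob_act M (0,\<tau>))" if "\<tau> > 0" for \<tau>
      using minpair_props(2)[OF dM v1 c1 mn1 imgV[OF that]] .
    show False
    proof (cases "p = 0 \<and> q = 0")
      case True
      then have "\<beta> * cnj \<delta> = 0" "\<alpha> * cnj \<gamma> = 0" unfolding p_def q_def by simp_all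
      then have "mob_act M ` Vl \<subseteq> Vl"
        using fst_mob_V[OF d] image_H3[OF dM Vl_H3] unfolding M Vl_def H3_def by auto
      then show False using np by simp
    next
      case False
      show False
      proof (cases "p = 0")
        case True
        then have qp: "q > 0" using False unfolding q_def by auto
        have "xV c1 \<le> xV (mob_act M (0,\<tau>1/2))" using mn \<tau>1 by simp
        then have "q\<^sup>2 * \<tau>1\<^sup>2 \<le> q\<^sup>2 * (\<tau>1/2)\<^sup>2" using xe \<tau>1 True by simp
        then show False using qp \<tau>1 by (simp add: power_divide field_simps)
      next
        case False
        then have pp: "p > 0" and q0: "q = 0" using pq0 unfolding p_def by auto
        have "xV c1 \<le> xV (mob_act M (0,2*\<tau>1))" using mn \<tau>1 by simp
        then have "p\<^sup>2 / \<tau>1\<^sup>2 \<le> p\<^sup>2 / (2*\<tau>1)\<^sup>2" using xe \<tau>1 q0 by simp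
        then show False using pp \<tau>1 by (simp add: power_divide field_simps)
      qed
    qed
  qed
  have tau_det: "\<tau>\<^sup>2 = p / q" if v: "v \<in> Vl" and c: "c = mob_act M (0,\<tau>)" and t: "\<tau> > 0"
     and mnv: "\<forall>v'\<in>Vl. \<forall>c'\<in>mob_act M ` Vl. hdist v c \<le> hdist v' c'" for v c \<tau>
  proof -
    have cI: "c \<in> mob_act M ` Vl" using c imgV[OF t] by simp
    define s where "s = sqrt (p / q)"
    have s: "s > 0" "s\<^sup>2 = p / q" unfolding s_def using pq by simp_all
    have "xV c \<le> xV (mob_act M (0,s))" using minpair_props(2)[OF dM v cI mnv imgV[OF s(1)]] .
    then have "p\<^sup>2 / \<tau>\<^sup>2 + q\<^sup>2 * \<tau>\<^sup>2 \<le> p\<^sup>2 / s\<^sup>2 + q\<^sup>2 * s\<^sup>2" using xe[OF t] xe[OF s(1)] c by simp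
    also have "\<dots> = 2 * p * q" unfolding s(2) using pq by (simp add: field_simps power2_eq_square)
    finally show ?thesis using G_min[of p q "\<tau>\<^sup>2"] pq t by simp
  qed
  obtain \<tau>1 where \<tau>1: "c1 = mob_act M (0,\<tau>1)" "\<tau>1 > 0" using c1 unfolding Vl_def by auto
  obtain \<tau>2 where \<tau>2: "c2 = mob_act M (0,\<tau>2)" "\<tau>2 > 0" using c2 unfolding Vl_def by auto
  have "\<tau>1\<^sup>2 = \<tau>2\<^sup>2" using tau_det[OF v1 \<tau>1(1) \<tau>1(2) mn1] tau_det[OF v2 \<tau>2(1) \<tau>2(2) mn2] by simp
  then have "\<tau>1 = \<tau>2" using \<tau>1(2) \<tau>2(2) by (simp add: power2_eq_iff_nonneg)
  then have cc: "c1 = c2" using \<tau>1 \<tau>2 by simp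
  have "v1 = footV c1" "v2 = footV c2" using minpair_props(1) dM v1 c1 mn1 v2 c2 mn2 by blast+
  then show ?thesis using cc by simp
qed

section \<open>The normalised statement\<close>

theorem NT:
  fixes a :: complex and h :: "complex^2^2" and p q z0 :: "complex \<times> real"
  assumes a0: "a \<noteq> 0" and a1: "a\<^sup>2 \<noteq> 1" and am: "cmod a \<noteq> 1"
    and dh: "det h = 1" and lox: "trace h \<notin> complex_of_real ` {-2..2}"
    and nc: "\<not> psl_commute (mk a 0 0 (1/a)) h"
    and p: "p \<in> Vl" and q: "q \<in> mob_act (matrix_inv h) ` Vl"
    and mn: "\<forall>p'\<in>Vl. \<forall>q'\<in>mob_act (matrix_inv h) ` Vl. hdist p q \<le> hdist p' q'"
    and mid: "hmidpoint p q z0"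
  shows "disp (mk a 0 0 (1/a)) z0 < disp (h ** mk a 0 0 (1/a) ** matrix_inv h) z0"
proof -
  define g0 where "g0 = mk a 0 0 (1/a)"
  define Hi where "Hi = matrix_inv h"
  have dg: "det g0 = 1" unfolding g0_def using a0 by simp
  have dHi: "det Hi = 1" unfolding Hi_def using inv_props[OF dh] by simp
  have pH: "p \<in> H3" using p Vl_H3 by blast
  have qH: "q \<in> H3" using q image_H3[OF dHi Vl_H3] unfolding Hi_def by blast
  have z0H: "z0 \<in> H3" using mid unfolding hmidpoint_def by simp
  define r where "r = hdist p q"
  have pz: "hdist p z0 = r / 2" and zq: "hdist z0 q = r / 2" using mid unfolding hmidpoint_def r_def by auto
  define z1 where "z1 = mob_act Hi z0"
  have z1H: "z1 \<in> H3" unfolding z1_def using mob_H3[OF dHi z0H] .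
  have hz1: "mob_act h z1 = z0" unfolding z1_def Hi_def using mob_inv(2)[OF dh z0H] .
  have HihH: "mob_act Hi (mob_act h x) = x" if "x \<in> H3" for x unfolding Hi_def using mob_inv(1)[OF dh that] .
  have hHiH: "mob_act h (mob_act Hi x) = x" if "x \<in> H3" for x unfolding Hi_def using mob_inv(2)[OF dh that] .
  have g0z1H: "mob_act g0 z1 \<in> H3" using mob_H3[OF dg z1H] .
  have disp2: "disp (h ** g0 ** Hi) z0 = disp g0 z1"
  proof -
    have "mob_act (h ** g0 ** Hi) z0 = mob_act h (mob_act g0 z1)"
      unfolding z1_def using mob_comp[OF det_mult1[OF dh dg] dHi z0H] mob_comp[OF dh dg mob_H3[OF dHi z0H]] by simp
    then have "disp (h ** g0 ** Hi) z0 = hdist (mob_act h z1) (mob_act h (mob_act g0 z1))"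
      unfolding disp_def hz1 by simp
    also have "\<dots> = hdist z1 (mob_act g0 z1)" using mob_isom[OF dh z1H g0z1H] .
    finally show ?thesis unfolding disp_def .
  qed
  have minC: "r \<le> hdist v c'" if v: "v \<in> Vl" and c': "c' \<in> mob_act h ` Vl" for v c'
  proof -
    obtain v' where v': "v' \<in> Vl" "c' = mob_act h v'" using c' by blast
    have vH: "v \<in> H3" using v Vl_H3 by blast
    have v'H: "v' \<in> H3" using v' Vl_H3 by blast
    have "hdist v c' = hdist (mob_act Hi v) (mob_act Hi c')"
      using mob_isom[OF dHi vH] mob_H3[OF dh v'H] v' by simp
    also have "\<dots> = hdist (mob_act Hi v) v'" using HihH[OF v'H] v' by simp
    also have "\<dots> = hdist v' (mob_act Hi v)" by (rule hdist_sym)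
    finally have e: "hdist v c' = hdist v' (mob_act Hi v)" .
    have "mob_act Hi v \<in> mob_act (matrix_inv h) ` Vl" using v unfolding Hi_def by blast
    then have "r \<le> hdist v' (mob_act Hi v)" using mn v' unfolding r_def by blast
    then show ?thesis using e by simp
  qed
  define a1 where "a1 = footV z1"
  have a1V: "a1 \<in> Vl" unfolding a1_def using footV_Vl[OF z1H] .
  have a1H: "a1 \<in> H3" using a1V Vl_H3 by blast
  define c where "c = mob_act h a1"
  have cC: "c \<in> mob_act h ` Vl" unfolding c_def using a1V by blast
  have cH: "c \<in> H3" unfolding c_def using mob_H3[OF dh a1H] .
  have d1: "delta z1 = hdist z0 c" unfolding delta_def a1_def[symmetric] c_def
    using mob_isom[OF dh z1H a1H] hz1 by simp
  have d0: "delta z0 \<le> r / 2" using delta_le[OF z0H p] pz by (simp add: hdist_sym)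
  have rpc: "r \<le> hdist p c" using minC[OF p cC] .
  have tri: "hdist p c \<le> hdist p z0 + hdist z0 c" using hdist_tri[OF pH z0H cH] .
  show ?thesis
  proof (rule ccontr)
    assume "\<not> ?thesis"
    then have "\<not> disp g0 z0 < disp g0 z1" using disp2 unfolding g0_def Hi_def by simp
    then have "\<not> xV z0 < xV z1" using disp_diag_less[OF a0 a1 z0H z1H] unfolding g0_def by blast
    then have "\<not> delta z0 < delta z1" using delta_less_iff[OF z0H z1H] by simp
    then have zc: "hdist z0 c = r / 2" and pc: "hdist p c = r" using d0 d1 rpc tri pz by linarith+
    have cq: "c = q"
    proof (cases "p = z0")
      case True
      then have r0: "r = 0" using pz by simp
      then have "c = z0" using hdist_zero[OF z0H cH] zc by simp
      moreover have "q = z0" using hdist_zero[OF z0H qH] zq r0 by simp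
      ultimately show ?thesis by simp
    next
      case False
      show ?thesis
      proof (rule ext_unique[OF z0H pH cH qH False])
        show "hdist z0 c = hdist z0 q" using zc zq by simp
        show "hdist p c = hdist p q" using pc r_def by simp
        show "hdist p c = hdist z0 p + hdist z0 c" using pc pz zc by (simp add: hdist_sym)
      qed
    qed
    have qC: "q \<in> mob_act h ` Vl" using cC cq by simp
    have hqV: "mob_act h q \<in> Vl"
    proof -
      obtain v where v: "v \<in> Vl" "q = mob_act Hi v" using q unfolding Hi_def by blast
      have vH: "v \<in> H3" using v(1) Vl_H3 by blast
      have "mob_act h q = v" using hHiH[OF vH] v(2) by simp
      then show ?thesis using v by simp
    qed
    have hpC: "mob_act h p \<in> mob_act h ` Vl" using p by blast
    have np: "\<not> (mob_act h ` Vl \<subseteq> Vl)" using h_not_pres[OF dh a0 nc lox] .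
    have mn1: "\<forall>v'\<in>Vl. \<forall>c'\<in>mob_act h ` Vl. hdist p q \<le> hdist v' c'"
      using minC unfolding r_def by blast
    have mn2: "\<forall>v'\<in>Vl. \<forall>c'\<in>mob_act h ` Vl. hdist (mob_act h q) (mob_act h p) \<le> hdist v' c'"
    proof -
      have e: "hdist (mob_act h q) (mob_act h p) = r" using mob_isom[OF dh qH pH] hdist_sym[of q p] r_def by simp
      show ?thesis unfolding e using minC by blast
    qed
    have pq: "p = mob_act h q \<and> q = mob_act h p"
      using perp_unique[OF dh np p qC hqV hpC mn1 mn2] .
    have e1: "mob_act h q = p" using conjunct1[OF pq] by (rule sym)
    have e2: "mob_act h p = q" using conjunct2[OF pq] by (rule sym)
    have "mob_act h (mob_act h p) = p" unfolding e2 e1 ..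
    then show False using lox_no_fix2[OF dh lox pH] by simp
  qed
qed

section \<open>Transfer to the general statement\<close>

lemma mat_rneg: "(A::complex^2^2) ** (- B::complex^2^2) = - (A ** B)"
proof -
  obtain a b c d where A: "A = mk a b c d" by (rule mk_cases)
  obtain a' b' c' d' where B: "B = mk a' b' c' d'" by (rule mk_cases)
  show ?thesis unfolding A B by (simp add: algebra_simps)
qed

lemma mat_lneg: "(- A::complex^2^2) ** (B::complex^2^2) = - (A ** B)"
proof -
  obtain a b c d where A: "A = mk a b c d" by (rule mk_cases)
  obtain a' b' c' d' where B: "B = mk a' b' c' d'" by (rule mk_cases)
  show ?thesis unfolding A B by (simp add: algebra_simps)
qed

lemma disp_conj:
  assumes M: "det M = 1" and X: "det X = 1" and z: "z \<in> H3"
  shows "disp (M ** X ** matrix_inv M) z = disp X (mob_act (matrix_inv M) z)"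
proof -
  define Mi where "Mi = matrix_inv M"
  have dMi: "det Mi = 1" unfolding Mi_def using inv_props[OF M] by simp
  define z' where "z' = mob_act Mi z"
  have z'H: "z' \<in> H3" unfolding z'_def using mob_H3[OF dMi z] .
  have Xz'H: "mob_act X z' \<in> H3" using mob_H3[OF X z'H] .
  have zz: "z = mob_act M z'" unfolding z'_def Mi_def using mob_inv(2)[OF M z] by simp
  have "mob_act (M ** X ** Mi) z = mob_act M (mob_act X z')"
    unfolding z'_def using mob_comp[OF det_mult1[OF M X] dMi z] mob_comp[OF M X mob_H3[OF dMi z]] by simp
  then have "disp (M ** X ** Mi) z = hdist (mob_act M z') (mob_act M (mob_act X z'))"
    unfolding disp_def using zz by simp
  also have "\<dots> = hdist z' (mob_act X z')" using mob_isom[OF M z'H Xz'H] .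
  finally show ?thesis unfolding disp_def Mi_def z'_def .
qed

theorem lemma6p2:
  fixes g h :: "complex^2^2" and p q z0 :: "complex \<times> real"
  assumes "g \<in> SL2" and "h \<in> SL2"
    and "loxodromic g" and "loxodromic h"
    and "\<not> psl_commute g h"
    and "p \<in> axis g" and "q \<in> axis (matrix_inv h ** g ** h)"
    and "\<forall>p'\<in>axis g. \<forall>q'\<in>axis (matrix_inv h ** g ** h). hdist p q \<le> hdist p' q'"
    and "hmidpoint p q z0"
  shows "disp g z0 < disp (h ** g ** matrix_inv h) z0"
proof -
  have dg: "det g = 1" and dh: "det h = 1" using assms(1,2) unfolding SL2_def by auto
  have lg: "trace g \<notin> complex_of_real ` {-2..2}" and lh: "trace h \<notin> complex_of_real ` {-2..2}"
    using assms(3,4) unfolding loxodromic_def by auto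
  obtain P a where dP: "det P = 1" and a0: "a \<noteq> 0" and a1: "a\<^sup>2 \<noteq> 1" and am: "cmod a \<noteq> 1"
    and gP: "g ** P = P ** mk a 0 0 (1/a)"
    using lox_diag[OF dg lg] by blast
  define g0 where "g0 = mk a 0 0 (1/a)"
  have dg0: "det g0 = 1" unfolding g0_def using a0 by simp
  define Pi where "Pi = matrix_inv P"
  define Hi where "Hi = matrix_inv h"
  have dPi: "det Pi = 1" unfolding Pi_def using inv_props[OF dP] by simp
  have dHi: "det Hi = 1" unfolding Hi_def using inv_props[OF dh] by simp
  have PPi: "P ** Pi = mat 1" "Pi ** P = mat 1" unfolding Pi_def using inv_props[OF dP] by auto
  have hHi: "h ** Hi = mat 1" "Hi ** h = mat 1" unfolding Hi_def using inv_props[OF dh] by auto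
  have c1: "X ** P ** Pi = X" "X ** Pi ** P = X" "X ** h ** Hi = X" "X ** Hi ** h = X" for X :: "complex^2^2"
    using PPi hHi by (simp_all flip: matrix_mul_assoc)
  have gE: "g = P ** g0 ** Pi"
  proof -
    have "g = g ** P ** Pi" using c1 by simp
    also have "\<dots> = P ** g0 ** Pi" unfolding gP g0_def ..
    finally show ?thesis .
  qed
  define h0 where "h0 = Pi ** h ** P"
  define H0i where "H0i = Pi ** Hi ** P"
  have dh0: "det h0 = 1" unfolding h0_def using dPi dh dP by (simp add: det_mul)
  have h0inv: "matrix_inv h0 = H0i"
  proof (rule matrix_inv_eq)
    show "h0 ** H0i = mat 1" unfolding h0_def H0i_def by (simp add: matrix_mul_assoc c1 PPi hHi)
    show "H0i ** h0 = mat 1" unfolding h0_def H0i_def by (simp add: matrix_mul_assoc c1 PPi hHi)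
  qed
  have dH0i: "det H0i = 1" using inv_props(3)[OF dh0] h0inv by simp
  have H0inv: "matrix_inv H0i = h0" using inv_props(4)[OF dh0] h0inv by simp
  have trh0: "trace h0 = trace h"
  proof -
    have "trace h0 = trace (P ** (Pi ** h))" unfolding h0_def by (rule trace_mul_sym)
    also have "P ** (Pi ** h) = h" using PPi by (simp add: matrix_mul_assoc)
    finally show ?thesis .
  qed
  have nc0: "\<not> psl_commute g0 h0"
  proof
    assume pc: "psl_commute g0 h0"
    have e1: "g ** h = P ** (g0 ** h0) ** Pi" unfolding gE h0_def by (simp add: matrix_mul_assoc c1 PPi hHi)
    have e2: "h ** g = P ** (h0 ** g0) ** Pi" unfolding gE h0_def by (simp add: matrix_mul_assoc c1 PPi hHi)
    have "psl_commute g h"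
      using pc unfolding psl_commute_def e1 e2 by (auto simp: mat_rneg mat_lneg)
    then show False using assms(5) by simp
  qed
  have u0: "\<exists>!L. geodesic_line L \<and> mob_act g0 ` L = L" and ax0: "axis g0 = Vl"
    unfolding g0_def using diag_axis[OF a0 a1 am] by auto
  have axg: "axis g = mob_act P ` Vl"
    unfolding gE Pi_def using axis_conj(2)[OF dP dg0 u0] ax0 by simp
  define X' where "X' = H0i ** g0 ** h0"
  have dX': "det X' = 1" unfolding X'_def using dH0i dg0 dh0 by (simp add: det_mul)
  have uX': "\<exists>!L. geodesic_line L \<and> mob_act X' ` L = L" and axX': "axis X' = mob_act H0i ` Vl"
    unfolding X'_def using axis_conj[OF dH0i dg0 u0] ax0 H0inv by auto
  have ehg: "matrix_inv h ** g ** h = P ** X' ** Pi"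
    unfolding X'_def H0i_def h0_def gE Hi_def[symmetric] by (simp add: matrix_mul_assoc c1 PPi hHi)
  have axq: "axis (matrix_inv h ** g ** h) = mob_act P ` mob_act H0i ` Vl"
    unfolding ehg Pi_def using axis_conj(2)[OF dP dX' uX'] axX' by simp
  have ehg2: "h ** g ** matrix_inv h = P ** (h0 ** g0 ** H0i) ** Pi"
    unfolding H0i_def h0_def gE Hi_def[symmetric] by (simp add: matrix_mul_assoc c1 PPi hHi)
  have PiP: "mob_act Pi (mob_act P x) = x" if "x \<in> H3" for x unfolding Pi_def using mob_inv(1)[OF dP that] .
  have H0iV: "mob_act H0i ` Vl \<subseteq> H3" using image_H3[OF dH0i Vl_H3] .
  define p' where "p' = mob_act Pi p"
  define q' where "q' = mob_act Pi q"
  define z' where "z' = mob_act Pi z0"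
  have p': "p' \<in> Vl"
  proof -
    obtain v where v: "v \<in> Vl" "p = mob_act P v" using assms(6) axg by blast
    have vH: "v \<in> H3" using v(1) Vl_H3 by blast
    show ?thesis unfolding p'_def v(2) PiP[OF vH] using v(1) .
  qed
  have q': "q' \<in> mob_act H0i ` Vl"
  proof -
    obtain v where v: "v \<in> mob_act H0i ` Vl" "q = mob_act P v" using assms(7) axq by blast
    have vH: "v \<in> H3" using v(1) H0iV by blast
    have "q' = v" unfolding q'_def v(2) PiP[OF vH] ..
    then show ?thesis using v by simp
  qed
  have pH: "p \<in> H3" using assms(6) axg image_H3[OF dP Vl_H3] by blast
  have qH: "q \<in> H3" using assms(7) axq image_H3[OF dP H0iV] by blast
  have zH: "z0 \<in> H3" using assms(9) unfolding hmidpoint_def by simp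
  have hpq: "hdist p' q' = hdist p q" unfolding p'_def q'_def using mob_isom[OF dPi pH qH] .
  have mn': "\<forall>p''\<in>Vl. \<forall>q''\<in>mob_act H0i ` Vl. hdist p' q' \<le> hdist p'' q''"
  proof (intro ballI)
    fix p'' q'' assume p'': "p'' \<in> Vl" and q'': "q'' \<in> mob_act H0i ` Vl"
    have "mob_act P p'' \<in> axis g" using p'' axg by blast
    moreover have "mob_act P q'' \<in> axis (matrix_inv h ** g ** h)" using q'' axq by blast
    ultimately have "hdist p q \<le> hdist (mob_act P p'') (mob_act P q'')" using assms(8) by blast
    also have "\<dots> = hdist p'' q''" using mob_isom[OF dP] p'' q'' Vl_H3 H0iV by blast
    finally show "hdist p' q' \<le> hdist p'' q''" using hpq by simp
  qed
  have mid': "hmidpoint p' q' z'"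
    using assms(9) mob_isom[OF dPi pH zH] mob_isom[OF dPi zH qH] mob_H3[OF dPi zH] hpq
    unfolding hmidpoint_def p'_def q'_def z'_def by simp
  have main: "disp g0 z' < disp (h0 ** g0 ** matrix_inv h0) z'"
    using NT[OF a0 a1 am dh0 _ _ p' _ _ mid'[unfolded]] lh trh0 nc0 q' mn' h0inv
    unfolding g0_def by simp
  have "disp g z0 = disp g0 z'" unfolding gE z'_def Pi_def using disp_conj[OF dP dg0 zH] by simp
  moreover have "disp (h ** g ** matrix_inv h) z0 = disp (h0 ** g0 ** H0i) z'"
    unfolding ehg2 z'_def Pi_def using disp_conj[OF dP _ zH] dh0 dg0 dH0i by (simp add: det_mul)
  ultimately show ?thesis using main h0inv by simp
qed


end
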